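(* The strong security polar coding scheme (described in the context) achieves strong security over the non-degraded delay-CSI wiretap channel model: writing $\mathbf{I}^t=U_t^{\mathcal{I}'_t}$ and $\mathbf{Z}^t=Z^N_{\mathbf{s}_t}$, the total information leakage satisfies $$\mathrm{L}(T+1)=I\big(\mathbf{I}^{1:T};\mathbf{Z}^{1:T}\big)\le (T+1)\,O\big(N2^{-N^\beta}\big),$$ so that for every fixed $T$, $\lim_{N\to\infty}\mathrm{L}(T+1)=0$.
   Context: Notation: $N=2^n$, $\beta\in(0,1/2)$, $\delta_N=2^{-N^\beta}$, $\mathbf{G}_N=\mathbf{R}\mathbf{F}^{\otimes n}$ over $\mathrm{GF}(2)$ with $\mathbf{F}=\begin{bmatrix}1&0\\1&1\end{bmatrix}$ and $\mathbf{R}$ the bit-reversal permutation; $U_t^{\mathcal{A}}=(U_t^i)_{i\in\mathcal{A}}$ for block $t$. Model: main channel is a fixed, publicly known symmetric binary-input DMC $p_{Y|X}$; wiretap channel has a finite state set $\mathcal{S}$, each $s$ a symmetric binary-input DMC $p^{(s)}_{Z|X}$, not necessarily degraded with respect to the main channel. Blocks $t=0,\dots,T$ of length $N$; in block $t$ the eavesdropper picks $\mathbf{s}_t$, constant ($s$, block-varying) or a sequence $s^{1:N}$ (arbitrarily varying, $i$-th use has law $p^{(s^i)}_{Z|X}$), and observes $Z^N_{\mathbf{s}_t}$; Alice and Bob learn $\mathbf{s}_t$ only after block $t$. Bhattacharyya parameter $Z(X|Y)=2\sum_y p_Y(y)\sqrt{p_{X|Y}(0|y)p_{X|Y}(1|y)}$;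 with $U^N$ uniform, $X^N=U^N\mathbf{G}_N$: $\mathcal{L}_{X|Y}=\{i:Z(U^i|U^{1:i-1},Y^N)\le\delta_N\}$, $\mathcal{H}^{(\mathbf{s})}_{X|Z}=\{i:Z(U^i|U^{1:i-1},Z^N_{\mathbf{s}})\ge1-\delta_N\}$; $\mathcal{I}_t=\mathcal{L}_{X|Y}\cap\mathcal{H}^{(\mathbf{s}_t)}_{X|Z}$, $\mathcal{F}_t=(\mathcal{L}_{X|Y})^c\cap\mathcal{H}^{(\mathbf{s}_t)}_{X|Z}$, $\mathcal{R}_t=\mathcal{L}_{X|Y}\cap(\mathcal{H}^{(\mathbf{s}_t)}_{X|Z})^c$, $\mathcal{B}_t=(\mathcal{L}_{X|Y})^c\cap(\mathcal{H}^{(\mathbf{s}_t)}_{X|Z})^c$. Assume $|\mathcal{B}_t|<|\mathcal{I}_t|$ and choose $\mathcal{B}'_t\subset\mathcal{I}_t$ with $|\mathcal{B}'_t|=|\mathcal{B}_t|$, $\mathcal{I}'_t=\mathcal{I}_t\setminus\mathcal{B}'_t$. Strong security scheme. Block 0: uniform random bits on $\mathcal{L}_{X|Y}$; secret frozen bits pre-shared by Alice and Bob (unknown to the eavesdropper) on $(\mathcal{L}_{X|Y})^c$; send $x_0^N=u_0^N\mathbf{G}_N$. After block $t$ (knowing $\mathbf{s}_t$): $u_t^{\mathcal{I}'_t}$ is the key stream; $u_t^{\mathcal{F}_t}$ and $u_t^{\mathcal{B}'_t}$ are placed (in a fixed agreed order) on $(\mathcal{L}_{X|Y})^c$ in block $t+1$.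 Block $t\ge1$: ciphertext $E_t=M_t\oplus u_{t-1}^{\mathcal{I}'_{t-1}}$, $|M_t|=|\mathcal{I}'_{t-1}|$, on $\mathcal{I}'_{t-1}$; uniform random bits on $\mathcal{R}_{t-1}$ and on $\mathcal{B}'_{t-1}$; $u_{t-1}^{\mathcal{F}_{t-1}},u_{t-1}^{\mathcal{B}'_{t-1}}$ on $(\mathcal{L}_{X|Y})^c$; send $x_t^N=u_t^N\mathbf{G}_N$. Bob decodes by successive cancellation on $\mathcal{L}_{X|Y}$ using previously decoded bits on $(\mathcal{L}_{X|Y})^c$. *)

theory Defs
  imports "HOL-Probability.Probability_Mass_Function"
begin

text \<open>Indices are 0-based: position i of a length-N vector corresponds to the
paper's index i+1.  Binary alphabet = bool, addition over GF(2) = (\<noteq>).\<close>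

definition sym_channel :: "(bool \<Rightarrow> 'y pmf) \<Rightarrow> bool" where
  "sym_channel W \<longleftrightarrow> (\<exists>\<pi>. \<pi> \<circ> \<pi> = id \<and> (\<forall>y. pmf (W True) y = pmf (W False) (\<pi> y)))"

definition bitrev :: "nat \<Rightarrow> nat \<Rightarrow> nat" where
  "bitrev n i = (\<Sum>k<n. if bit i k then 2 ^ (n - 1 - k) else 0)"

text \<open>Entry (i,j) of G_N = R F^{\<otimes>n}: (F^{\<otimes>n})(a,j)=1 iff the bits of j are
contained in the bits of a; R permutes rows by bit reversal.\<close>
definition polarG :: "nat \<Rightarrow> nat \<Rightarrow> nat \<Rightarrow> bool" where
  "polarG n i j \<longleftrightarrow> (\<forall>k<n. bit j k \<longrightarrow> bit (bitrev n i) k)"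

definition polar_enc :: "nat \<Rightarrow> bool list \<Rightarrow> bool list" where
  "polar_enc n u = map (\<lambda>j. odd (card {i. i < 2 ^ n \<and> u ! i \<and> polarG n i j})) [0..<2 ^ n]"

fun chan_list :: "('x \<Rightarrow> 'y pmf) list \<Rightarrow> 'x list \<Rightarrow> 'y list pmf" where
  "chan_list (W # Ws) (x # xs) = bind_pmf (W x) (\<lambda>y. bind_pmf (chan_list Ws xs) (\<lambda>ys. return_pmf (y # ys)))"
| "chan_list _ _ = return_pmf []"

definition unif_vec :: "nat \<Rightarrow> bool list pmf" where
  "unif_vec N = pmf_of_set {u. length u = N}"

definition bhatt :: "(bool \<times> 'c) pmf \<Rightarrow> real" where
  "bhatt P = (let PY = map_pmf snd P in
     2 * (\<Sum>y\<in>set_pmf PY. pmf PY y *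
           sqrt ((pmf P (False, y) / pmf PY y) * (pmf P (True, y) / pmf PY y))))"

definition polar_joint :: "nat \<Rightarrow> (bool \<Rightarrow> 'y pmf) list \<Rightarrow> (bool list \<times> 'y list) pmf" where
  "polar_joint n Ws = bind_pmf (unif_vec (2 ^ n))
     (\<lambda>u. bind_pmf (chan_list Ws (polar_enc n u)) (\<lambda>y. return_pmf (u, y)))"

definition bhatt_idx :: "nat \<Rightarrow> (bool \<Rightarrow> 'y pmf) list \<Rightarrow> nat \<Rightarrow> real" where
  "bhatt_idx n Ws i = bhatt (map_pmf (\<lambda>(u, y). (u ! i, (take i u, y))) (polar_joint n Ws))"

definition delta :: "nat \<Rightarrow> real \<Rightarrow> real" where
  "delta n \<beta> = 2 powr (- (real (2 ^ n) powr \<beta>))"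

definition Lset :: "nat \<Rightarrow> real \<Rightarrow> (bool \<Rightarrow> 'y pmf) \<Rightarrow> nat set" where
  "Lset n \<beta> W = {i. i < 2 ^ n \<and> bhatt_idx n (replicate (2 ^ n) W) i \<le> delta n \<beta>}"

text \<open>H^{(s)}_{X|Z} for a state sequence s^{1:N} given as the list of channels
used at the N positions (constant state = replicated channel).\<close>
definition Hset :: "nat \<Rightarrow> real \<Rightarrow> (bool \<Rightarrow> 'z pmf) list \<Rightarrow> nat set" where
  "Hset n \<beta> Ws = {i. i < 2 ^ n \<and> bhatt_idx n Ws i \<ge> 1 - delta n \<beta>}"

definition mi :: "('a \<times> 'b) pmf \<Rightarrow> real" where
  "mi P = (\<Sum>xy\<in>set_pmf P. pmf P xy *
            log 2 (pmf P xy / (pmf (map_pmf fst P) (fst xy) * pmf (map_pmf snd P) (snd xy))))"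

text \<open>A fresh uniform vector w supplies the (uniform) message M_t on I'_{t-1}
(ciphertext M_t xor u_{t-1} there) and the uniform random bits on R_{t-1} and B'_{t-1};
on the frozen positions (complement of L), position i carries u_{t-1}(sig i),
where sig is the agreed bijection from L^c onto F_{t-1} \<union> B'_{t-1}.\<close>
definition scheme_step :: "nat \<Rightarrow> nat set \<Rightarrow> nat set \<Rightarrow> (nat \<Rightarrow> nat) \<Rightarrow> bool list \<Rightarrow> bool list pmf" where
  "scheme_step n L Ip sig u = bind_pmf (unif_vec (2 ^ n))
     (\<lambda>w. return_pmf (map (\<lambda>i. if i \<in> L then (if i \<in> Ip then w ! i \<noteq> u ! i else w ! i)
                               else u ! (sig i)) [0..<2 ^ n]))"

text \<open>History of blocks 0..t: list of (u_t, z_t).  Block 0: u_0 uniform (random bits on L,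
uniformly distributed pre-shared secret frozen bits on L^c).  Wzl t is the list of
eavesdropper channels used in block t.\<close>
fun scheme_run :: "nat \<Rightarrow> nat set \<Rightarrow> (nat \<Rightarrow> nat set) \<Rightarrow> (nat \<Rightarrow> nat \<Rightarrow> nat)
                   \<Rightarrow> (nat \<Rightarrow> (bool \<Rightarrow> 'z pmf) list) \<Rightarrow> nat \<Rightarrow> (bool list \<times> 'z list) list pmf" where
  "scheme_run n L Ip sig Wzl 0 = bind_pmf (unif_vec (2 ^ n))
     (\<lambda>u. bind_pmf (chan_list (Wzl 0) (polar_enc n u)) (\<lambda>z. return_pmf [(u, z)]))"
| "scheme_run n L Ip sig Wzl (Suc t) = bind_pmf (scheme_run n L Ip sig Wzl t)
     (\<lambda>h. bind_pmf (scheme_step n L (Ip t) (sig (Suc t)) (fst (last h)))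
       (\<lambda>u'. bind_pmf (chan_list (Wzl (Suc t)) (polar_enc n u'))
         (\<lambda>z. return_pmf (h @ [(u', z)]))))"

definition leakage :: "nat \<Rightarrow> nat set \<Rightarrow> (nat \<Rightarrow> nat set) \<Rightarrow> (nat \<Rightarrow> nat \<Rightarrow> nat)
                   \<Rightarrow> (nat \<Rightarrow> (bool \<Rightarrow> 'z pmf) list) \<Rightarrow> nat \<Rightarrow> real" where
  "leakage n L Ip sig Wzl T = mi (map_pmf
     (\<lambda>h. (map (\<lambda>t. map (\<lambda>i. fst (h ! t) ! i) (sorted_list_of_set (Ip t))) [1..<Suc T],
           map (\<lambda>t. snd (h ! t)) [1..<Suc T]))
     (scheme_run n L Ip sig Wzl T))"

end

theory Submission
  imports Defs
begin

definition EE :: "'a pmf \<Rightarrow> ('a \<Rightarrow> real) \<Rightarrow> real" where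
  "EE P g = (\<Sum>\<omega>\<in>set_pmf P. pmf P \<omega> * g \<omega>)"

definition pf :: "'a pmf \<Rightarrow> ('a \<Rightarrow> 'b) \<Rightarrow> 'a \<Rightarrow> real" where
  "pf P f \<omega> = pmf (map_pmf f P) (f \<omega>)"

definition ent :: "'a pmf \<Rightarrow> ('a \<Rightarrow> 'b) \<Rightarrow> real" where
  "ent P f = EE P (\<lambda>\<omega>. - log 2 (pf P f \<omega>))"

lemma EE_integral: "finite (set_pmf P) \<Longrightarrow> EE P g = measure_pmf.expectation P g"
  unfolding EE_def by (subst integral_measure_pmf_real[of "set_pmf P"]) (auto simp: mult.commute)

lemma EE_map: "finite (set_pmf P) \<Longrightarrow> EE (map_pmf f P) G = EE P (\<lambda>\<omega>. G (f \<omega>))"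
  by (simp add: EE_integral)

lemma EE_cong: "(\<And>\<omega>. \<omega> \<in> set_pmf P \<Longrightarrow> g \<omega> = h \<omega>) \<Longrightarrow> EE P g = EE P h"
  unfolding EE_def by (auto intro!: sum.cong)

lemma EE_mono: "(\<And>\<omega>. \<omega> \<in> set_pmf P \<Longrightarrow> g \<omega> \<le> h \<omega>) \<Longrightarrow> EE P g \<le> EE P h"
  unfolding EE_def by (auto intro!: sum_mono mult_left_mono)

lemma EE_add: "EE P (\<lambda>\<omega>. g \<omega> + h \<omega>) = EE P g + EE P h"
  unfolding EE_def by (simp add: distrib_left sum.distrib)

lemma EE_diff: "EE P (\<lambda>\<omega>. g \<omega> - h \<omega>) = EE P g - EE P h"
  unfolding EE_def by (simp add: right_diff_distrib sum_subtractf)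

lemma EE_cmult: "EE P (\<lambda>\<omega>. c * g \<omega>) = c * EE P g"
  unfolding EE_def by (simp add: sum_distrib_left algebra_simps)

lemma EE_const: "finite (set_pmf P) \<Longrightarrow> EE P (\<lambda>\<omega>. c) = c"
  unfolding EE_def by (simp add: sum_distrib_right[symmetric] sum_pmf_eq_1)

lemma pmf_map_Ex: "finite (set_pmf P) \<Longrightarrow> pmf (map_pmf f P) y = EE P (\<lambda>\<omega>. if f \<omega> = y then 1 else 0)"
proof -
  assume fin: "finite (set_pmf P)"
  have "pmf (map_pmf f P) y = measure P (f -` {y} \<inter> set_pmf P)"
    by (simp add: pmf_map measure_Int_set_pmf)
  also have "\<dots> = (\<Sum>\<omega>\<in>f -` {y} \<inter> set_pmf P. pmf P \<omega>)"
    using fin by (simp add: measure_measure_pmf_finite)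
  also have "\<dots> = EE P (\<lambda>\<omega>. if f \<omega> = y then 1 else 0)"
    unfolding EE_def using fin
    by (simp add: sum.inter_filter Int_commute Int_def if_distrib cong: if_cong)
  finally show ?thesis .
qed

lemma pf_pos: "\<omega> \<in> set_pmf P \<Longrightarrow> pf P f \<omega> > 0"
  unfolding pf_def using pmf_positive by (metis imageI set_map_pmf)

lemma pf_le1: "pf P f \<omega> \<le> 1"
  unfolding pf_def by (rule pmf_le_1)

lemma ent_map: "finite (set_pmf P) \<Longrightarrow> ent (map_pmf g P) f = ent P (\<lambda>\<omega>. f (g \<omega>))"
  unfolding ent_def pf_def by (simp add: EE_map map_pmf_comp o_def)

lemma ent_nonneg: "ent P f \<ge> 0"
proof -
  have "log 2 (pf P f x) \<le> 0" if "x \<in> set_pmf P" for x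
    using log_le_cancel_iff[of 2 "pf P f x" 1] pf_pos[OF that, of f] pf_le1[of P f x] by simp
  thus ?thesis unfolding ent_def EE_def by (auto intro!: sum_nonneg mult_nonneg_nonpos)
qed

lemma pf_mono:
  assumes fin: "finite (set_pmf P)" and w: "\<omega> \<in> set_pmf P"
    and det: "\<And>\<omega>'. \<omega>' \<in> set_pmf P \<Longrightarrow> f \<omega>' = f \<omega> \<Longrightarrow> g \<omega>' = g \<omega>"
  shows "pf P f \<omega> \<le> pf P g \<omega>"
  unfolding pf_def using fin det
  by (auto simp: pmf_map_Ex intro!: EE_mono)

lemma ent_mono_det:
  assumes fin: "finite (set_pmf P)"
    and det: "\<And>\<omega> \<omega>'. \<omega> \<in> set_pmf P \<Longrightarrow> \<omega>' \<in> set_pmf P \<Longrightarrow> f \<omega>' = f \<omega> \<Longrightarrow> g \<omega>' = g \<omega>"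
  shows "ent P g \<le> ent P f"
  unfolding ent_def
proof (rule EE_mono)
  fix \<omega> assume w: "\<omega> \<in> set_pmf P"
  have "pf P f \<omega> \<le> pf P g \<omega>" using pf_mono[OF fin w] det w by blast
  thus "- log 2 (pf P g \<omega>) \<le> - log 2 (pf P f \<omega>)" using pf_pos[OF w, of f] pf_pos[OF w, of g] by (simp add: log_le_cancel_iff)
qed

lemma ent_eq_det:
  assumes fin: "finite (set_pmf P)"
    and det: "\<And>\<omega> \<omega>'. \<omega> \<in> set_pmf P \<Longrightarrow> \<omega>' \<in> set_pmf P \<Longrightarrow> f \<omega>' = f \<omega> \<longleftrightarrow> g \<omega>' = g \<omega>"
  shows "ent P f = ent P g"
  using ent_mono_det[OF fin, of f g] ent_mono_det[OF fin, of g f] det by force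

lemma jensen_log:
  assumes fin: "finite (set_pmf P)" and pos: "\<And>\<omega>. \<omega> \<in> set_pmf P \<Longrightarrow> r \<omega> > 0"
  shows "EE P (\<lambda>\<omega>. log 2 (r \<omega>)) \<le> log 2 (EE P r)"
proof -
  have m: "EE P r > 0"
  proof -
    obtain \<omega> where w: "\<omega> \<in> set_pmf P" using set_pmf_not_empty[of P] by blast
    have "EE P r \<ge> pmf P \<omega> * r \<omega>" unfolding EE_def
      using fin w pos by (intro member_le_sum) (auto intro!: mult_nonneg_nonneg less_imp_le[OF pos])
    moreover have "pmf P \<omega> * r \<omega> > 0" using w pos by (simp add: pmf_positive)
    ultimately show ?thesis by linarith
  qed
  define m where "m = EE P r"
  have "EE P (\<lambda>\<omega>. ln (r \<omega>) - ln m) \<le> EE P (\<lambda>\<omega>. r \<omega> / m - 1)"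
  proof (rule EE_mono)
    fix \<omega> assume "\<omega> \<in> set_pmf P"
    hence "r \<omega> / m > 0" using pos m m_def by simp
    hence "ln (r \<omega> / m) \<le> r \<omega> / m - 1" by (rule ln_le_minus_one)
    thus "ln (r \<omega>) - ln m \<le> r \<omega> / m - 1" using pos[OF \<open>\<omega> \<in> _\<close>] m m_def by (simp add: ln_div)
  qed
  also have "\<dots> = 0"
  proof -
    have "EE P (\<lambda>\<omega>. r \<omega> / m) = inverse m * EE P r"
      using EE_cmult[of P "inverse m" r] by (simp add: divide_inverse mult.commute)
    thus ?thesis using m m_def fin by (simp add: EE_diff EE_const)
  qed
  finally have "EE P (\<lambda>\<omega>. ln (r \<omega>)) \<le> ln m" using fin by (simp add: EE_diff EE_const)
  hence "EE P (\<lambda>\<omega>. ln (r \<omega>)) / ln 2 \<le> ln m / ln 2" by (simp add: divide_right_mono)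
  thus ?thesis unfolding log_def m_def using EE_cmult[of P "inverse (ln 2)" "\<lambda>\<omega>. ln (r \<omega>)"]
    by (simp add: divide_inverse mult.commute)
qed



lemma EE_minus: "EE P (\<lambda>\<omega>. - g \<omega>) = - EE P g"
  unfolding EE_def by (simp add: sum_negf)

lemma EE_sum: "EE P (\<lambda>\<omega>. \<Sum>y\<in>Y. f y \<omega>) = (\<Sum>y\<in>Y. EE P (f y))"
  unfolding EE_def by (simp add: sum_distrib_left sum.swap[of _ Y])

lemma log_pos_mult: "x > 0 \<Longrightarrow> y > 0 \<Longrightarrow> log 2 (x * y) = log 2 x + log 2 y"
  by (simp add: log_mult)

lemma marg_sum:
  assumes fin: "finite (set_pmf P)"
  shows "(\<Sum>y\<in>{y. (y, z) \<in> set_pmf (map_pmf (\<lambda>\<omega>. (b \<omega>, c \<omega>)) P)}.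
            pmf (map_pmf (\<lambda>\<omega>. (b \<omega>, c \<omega>)) P) (y, z)) = pmf (map_pmf c P) z"
proof -
  define Y where "Y = {y. (y, z) \<in> set_pmf (map_pmf (\<lambda>\<omega>. (b \<omega>, c \<omega>)) P)}"
  have "(\<Sum>y\<in>Y. pmf (map_pmf (\<lambda>\<omega>. (b \<omega>, c \<omega>)) P) (y, z))
      = (\<Sum>y\<in>Y. EE P (\<lambda>\<omega>. if (b \<omega>, c \<omega>) = (y, z) then 1 else 0))"
    using fin by (simp add: pmf_map_Ex)
  also have "\<dots> = EE P (\<lambda>\<omega>. \<Sum>y\<in>Y. if (b \<omega>, c \<omega>) = (y, z) then 1 else 0)"
    by (simp add: EE_sum)
  also have "\<dots> = EE P (\<lambda>\<omega>. if c \<omega> = z then 1 else 0)"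
  proof (rule EE_cong)
    fix \<omega> assume w: "\<omega> \<in> set_pmf P"
    have "(\<Sum>y\<in>Y. if (b \<omega>, c \<omega>) = (y, z) then 1 else 0)
        = (\<Sum>y\<in>Y. if b \<omega> = y then (if c \<omega> = z then 1 else 0) else (0::real))"
      by (intro sum.cong) auto
    also have "\<dots> = (if b \<omega> \<in> Y then (if c \<omega> = z then 1 else 0) else 0)"
    proof -
      have "finite (set_pmf (map_pmf (\<lambda>\<omega>. (b \<omega>, c \<omega>)) P))" using fin by simp
      hence "finite Y" unfolding Y_def
        by (rule finite_subset[rotated, OF finite_imageI[of _ fst]]) force
      thus ?thesis by (rule sum.delta')
    qed
    also have "\<dots> = (if c \<omega> = z then 1 else 0)"
      using w unfolding Y_def by auto
    finally show "(\<Sum>y\<in>Y. if (b \<omega>, c \<omega>) = (y, z) then 1 else 0) = (if c \<omega> = z then 1 else (0::real))" .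
  qed
  also have "\<dots> = pmf (map_pmf c P) z" using fin by (simp add: pmf_map_Ex)
  finally show ?thesis unfolding Y_def .
qed

lemma ssa:
  assumes fin: "finite (set_pmf P)"
  shows "ent P (\<lambda>\<omega>. (a \<omega>, b \<omega>, c \<omega>)) + ent P c
         \<le> ent P (\<lambda>\<omega>. (a \<omega>, c \<omega>)) + ent P (\<lambda>\<omega>. (b \<omega>, c \<omega>))"
proof -
  define Mabc where "Mabc = map_pmf (\<lambda>\<omega>. (a \<omega>, b \<omega>, c \<omega>)) P"
  define Mac where "Mac = map_pmf (\<lambda>\<omega>. (a \<omega>, c \<omega>)) P"
  define Mbc where "Mbc = map_pmf (\<lambda>\<omega>. (b \<omega>, c \<omega>)) P"
  define Mc where "Mc = map_pmf c P"
  define G where "G = (\<lambda>(x, y, z). pmf Mac (x, z) * pmf Mbc (y, z) / (pmf Mabc (x, y, z) * pmf Mc z))"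
  define r where "r = (\<lambda>\<omega>. G (a \<omega>, b \<omega>, c \<omega>))"
  have r_eq: "r \<omega> = pf P (\<lambda>\<omega>. (a \<omega>, c \<omega>)) \<omega> * pf P (\<lambda>\<omega>. (b \<omega>, c \<omega>)) \<omega>
       / (pf P (\<lambda>\<omega>. (a \<omega>, b \<omega>, c \<omega>)) \<omega> * pf P c \<omega>)" for \<omega>
    unfolding r_def G_def pf_def Mabc_def Mac_def Mbc_def Mc_def by simp
  have rpos: "r \<omega> > 0" if "\<omega> \<in> set_pmf P" for \<omega>
    unfolding r_eq using pf_pos[OF that, of "\<lambda>\<omega>. (a \<omega>, c \<omega>)"] pf_pos[OF that, of "\<lambda>\<omega>. (b \<omega>, c \<omega>)"]
      pf_pos[OF that, of c] pf_pos[OF that, of "\<lambda>\<omega>. (a \<omega>, b \<omega>, c \<omega>)"]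
    by (intro divide_pos_pos mult_pos_pos)
  have finM: "finite (set_pmf Mabc)" "finite (set_pmf Mac)" "finite (set_pmf Mbc)"
    using fin unfolding Mabc_def Mac_def Mbc_def by auto
  have "EE P r = EE Mabc G" unfolding r_def Mabc_def using fin by (simp add: EE_map)
  also have "\<dots> = (\<Sum>v\<in>set_pmf Mabc. pmf Mac (fst v, snd (snd v)) * pmf Mbc (fst (snd v), snd (snd v)) / pmf Mc (snd (snd v)))"
    unfolding EE_def G_def by (intro sum.cong) (auto simp: set_pmf_eq)
  also have "\<dots> \<le> (\<Sum>v\<in>(\<lambda>((x,z),y). (x,y,z)) ` (SIGMA xz:set_pmf Mac. {y. (y, snd xz) \<in> set_pmf Mbc}).
            pmf Mac (fst v, snd (snd v)) * pmf Mbc (fst (snd v), snd (snd v)) / pmf Mc (snd (snd v)))"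
  proof (rule sum_mono2)
    have "finite {y. (y, z) \<in> set_pmf Mbc}" for z
      using finite_imageI[OF finM(3), of fst] by (rule finite_subset[rotated]) force
    thus "finite ((\<lambda>((x,z),y). (x,y,z)) ` (SIGMA xz:set_pmf Mac. {y. (y, snd xz) \<in> set_pmf Mbc}))"
      using finM by auto
    show "set_pmf Mabc \<subseteq> (\<lambda>((x,z),y). (x,y,z)) ` (SIGMA xz:set_pmf Mac. {y. (y, snd xz) \<in> set_pmf Mbc})"
    proof
      fix v assume "v \<in> set_pmf Mabc"
      then obtain \<omega> where w: "\<omega> \<in> set_pmf P" "v = (a \<omega>, b \<omega>, c \<omega>)" unfolding Mabc_def by auto
      show "v \<in> (\<lambda>((x,z),y). (x,y,z)) ` (SIGMA xz:set_pmf Mac. {y. (y, snd xz) \<in> set_pmf Mbc})"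
        using w unfolding Mac_def Mbc_def by (auto intro!: image_eqI[of _ _ "((a \<omega>, c \<omega>), b \<omega>)"])
    qed
  qed (auto intro!: divide_nonneg_nonneg mult_nonneg_nonneg)
  also have "\<dots> = (\<Sum>xz\<in>set_pmf Mac. \<Sum>y\<in>{y. (y, snd xz) \<in> set_pmf Mbc}.
            pmf Mac xz * pmf Mbc (y, snd xz) / pmf Mc (snd xz))"
  proof -
    have "finite {y. (y, z) \<in> set_pmf Mbc}" for z
      using finite_imageI[OF finM(3), of fst] by (rule finite_subset[rotated]) force
    hence "finite (SIGMA xz:set_pmf Mac. {y. (y, snd xz) \<in> set_pmf Mbc})" using finM by auto
    moreover have "inj_on (\<lambda>((x,z),y). (x,y,z)) (SIGMA xz:set_pmf Mac. {y. (y, snd xz) \<in> set_pmf Mbc})"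
      by (auto simp: inj_on_def)
    ultimately have "(\<Sum>v\<in>(\<lambda>((x,z),y). (x,y,z)) ` (SIGMA xz:set_pmf Mac. {y. (y, snd xz) \<in> set_pmf Mbc}).
            pmf Mac (fst v, snd (snd v)) * pmf Mbc (fst (snd v), snd (snd v)) / pmf Mc (snd (snd v)))
       = (\<Sum>v\<in>(SIGMA xz:set_pmf Mac. {y. (y, snd xz) \<in> set_pmf Mbc}).
            pmf Mac (fst v) * pmf Mbc (snd v, snd (fst v)) / pmf Mc (snd (fst v)))"
      by (subst sum.reindex) (auto simp: split_beta)
    also have "\<dots> = (\<Sum>xz\<in>set_pmf Mac. \<Sum>y\<in>{y. (y, snd xz) \<in> set_pmf Mbc}.
            pmf Mac xz * pmf Mbc (y, snd xz) / pmf Mc (snd xz))"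
      using \<open>\<And>z. finite {y. (y, z) \<in> set_pmf Mbc}\<close> finM
      by (subst sum.Sigma) (auto simp: split_beta)
    finally show ?thesis .
  qed
  also have "\<dots> = (\<Sum>xz\<in>set_pmf Mac. pmf Mac xz / pmf Mc (snd xz) *
                   (\<Sum>y\<in>{y. (y, snd xz) \<in> set_pmf Mbc}. pmf Mbc (y, snd xz)))"
    by (simp add: sum_distrib_left)
  also have "\<dots> = (\<Sum>xz\<in>set_pmf Mac. pmf Mac xz)"
  proof (intro sum.cong refl)
    fix xz assume xz: "xz \<in> set_pmf Mac"
    have s: "(\<Sum>y\<in>{y. (y, snd xz) \<in> set_pmf Mbc}. pmf Mbc (y, snd xz)) = pmf Mc (snd xz)"
      unfolding Mbc_def Mc_def by (rule marg_sum[OF fin])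
    have "pmf Mc (snd xz) > 0" using xz unfolding Mac_def Mc_def
      by (auto simp: pmf_positive)
    thus "pmf Mac xz / pmf Mc (snd xz) * (\<Sum>y\<in>{y. (y, snd xz) \<in> set_pmf Mbc}. pmf Mbc (y, snd xz)) = pmf Mac xz"
      unfolding s by simp
  qed
  also have "\<dots> = 1" using finM by (simp add: sum_pmf_eq_1)
  finally have Er: "EE P r \<le> 1" .
  have "EE P (\<lambda>\<omega>. log 2 (r \<omega>)) \<le> log 2 (EE P r)" by (rule jensen_log[OF fin rpos])
  also have "\<dots> \<le> 0"
  proof -
    obtain \<omega> where w: "\<omega> \<in> set_pmf P" using set_pmf_not_empty[of P] by blast
    have "EE P r \<ge> pmf P \<omega> * r \<omega>" unfolding EE_def
      using fin w rpos by (intro member_le_sum) (auto intro!: mult_nonneg_nonneg less_imp_le[OF rpos])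
    moreover have "pmf P \<omega> * r \<omega> > 0" using w rpos by (simp add: pmf_positive)
    ultimately have "EE P r > 0" by linarith
    thus ?thesis using Er by simp
  qed
  finally have L: "EE P (\<lambda>\<omega>. log 2 (r \<omega>)) \<le> 0" .
  have "EE P (\<lambda>\<omega>. log 2 (r \<omega>)) = ent P (\<lambda>\<omega>. (a \<omega>, b \<omega>, c \<omega>)) + ent P c
         - ent P (\<lambda>\<omega>. (a \<omega>, c \<omega>)) - ent P (\<lambda>\<omega>. (b \<omega>, c \<omega>))"
  proof -
    have "EE P (\<lambda>\<omega>. log 2 (r \<omega>)) = EE P (\<lambda>\<omega>. (((- log 2 (pf P (\<lambda>\<omega>. (a \<omega>, b \<omega>, c \<omega>)) \<omega>)) + (- log 2 (pf P c \<omega>)))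
           - (- log 2 (pf P (\<lambda>\<omega>. (a \<omega>, c \<omega>)) \<omega>))) - (- log 2 (pf P (\<lambda>\<omega>. (b \<omega>, c \<omega>)) \<omega>)))"
    proof (rule EE_cong)
      fix \<omega> assume w: "\<omega> \<in> set_pmf P"
      note p = pf_pos[OF w]
      show "log 2 (r \<omega>) = (((- log 2 (pf P (\<lambda>\<omega>. (a \<omega>, b \<omega>, c \<omega>)) \<omega>)) + (- log 2 (pf P c \<omega>)))
           - (- log 2 (pf P (\<lambda>\<omega>. (a \<omega>, c \<omega>)) \<omega>))) - (- log 2 (pf P (\<lambda>\<omega>. (b \<omega>, c \<omega>)) \<omega>))"
        unfolding r_eq using p[of "\<lambda>\<omega>. (a \<omega>, c \<omega>)"] p[of "\<lambda>\<omega>. (b \<omega>, c \<omega>)"] p[of c]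
          p[of "\<lambda>\<omega>. (a \<omega>, b \<omega>, c \<omega>)"]
        by (simp add: log_divide log_mult)
    qed
    thus ?thesis unfolding ent_def by (simp add: EE_diff EE_add EE_minus)
  qed
  thus ?thesis using L by linarith
qed



lemma EE_pos:
  assumes fin: "finite (set_pmf P)" and pos: "\<And>\<omega>. \<omega> \<in> set_pmf P \<Longrightarrow> r \<omega> > 0"
  shows "EE P r > 0"
proof -
  obtain \<omega> where w: "\<omega> \<in> set_pmf P" using set_pmf_not_empty[of P] by blast
  have "EE P r \<ge> pmf P \<omega> * r \<omega>" unfolding EE_def
    using fin w pos by (intro member_le_sum) (auto intro!: mult_nonneg_nonneg less_imp_le[OF pos])
  moreover have "pmf P \<omega> * r \<omega> > 0" using w pos by (simp add: pmf_positive)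
  ultimately show ?thesis by linarith
qed

lemma EE_inv_pf:
  assumes fin: "finite (set_pmf P)"
  shows "EE P (\<lambda>\<omega>. 1 / pf P f \<omega>) = card (f ` set_pmf P)"
proof -
  have "EE P (\<lambda>\<omega>. 1 / pf P f \<omega>) = EE (map_pmf f P) (\<lambda>y. 1 / pmf (map_pmf f P) y)"
    using fin by (simp add: EE_map pf_def)
  also have "\<dots> = (\<Sum>y\<in>set_pmf (map_pmf f P). 1)"
    unfolding EE_def by (intro sum.cong) (auto simp: set_pmf_eq)
  finally show ?thesis by simp
qed

lemma ent_alt: "ent P f = EE P (\<lambda>\<omega>. log 2 (1 / pf P f \<omega>))"
  unfolding ent_def
proof (intro EE_cong)
  fix \<omega> assume "\<omega> \<in> set_pmf P"
  thus "- log 2 (pf P f \<omega>) = log 2 (1 / pf P f \<omega>)" using pf_pos[of \<omega> P f] by (simp add: log_divide)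
qed

lemma ent_le_log_card:
  assumes fin: "finite (set_pmf P)" and A: "finite A" "f ` set_pmf P \<subseteq> A"
  shows "ent P f \<le> log 2 (card A)"
proof -
  have "ent P f \<le> log 2 (EE P (\<lambda>\<omega>. 1 / pf P f \<omega>))"
    unfolding ent_alt by (rule jensen_log[OF fin]) (simp add: pf_pos)
  also have "\<dots> = log 2 (card (f ` set_pmf P))" using EE_inv_pf[OF fin, of f] by simp
  also have "\<dots> \<le> log 2 (card A)"
  proof -
    have "card (f ` set_pmf P) > 0" using fin set_pmf_not_empty[of P] by (simp add: card_gt_0_iff)
    moreover have "card (f ` set_pmf P) \<le> card A" using A by (rule card_mono)
    ultimately show ?thesis by simp
  qed
  finally show ?thesis .
qed

lemma ent_uniform:
  assumes fin: "finite (set_pmf P)" and A: "finite A" "A \<noteq> {}" and M: "map_pmf f P = pmf_of_set A"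
  shows "ent P f = log 2 (card A)"
proof -
  have "ent P f = EE P (\<lambda>\<omega>. log 2 (card A))"
    unfolding ent_alt
  proof (rule EE_cong)
    fix \<omega> assume w: "\<omega> \<in> set_pmf P"
    have "f \<omega> \<in> set_pmf (map_pmf f P)" using w by simp
    hence "f \<omega> \<in> A" using M A by simp
    thus "log 2 (1 / pf P f \<omega>) = log 2 (card A)" unfolding pf_def M using A by simp
  qed
  thus ?thesis using fin by (simp add: EE_const)
qed

lemma ent_max_uniform:
  assumes fin: "finite (set_pmf P)" and A: "finite A" "f ` set_pmf P \<subseteq> A"
    and H: "ent P f \<ge> log 2 (card A)"
  shows "map_pmf f P = pmf_of_set A"
proof -
  define S where "S = f ` set_pmf P"
  define m where "m = real (card S)"
  have Sne: "S \<noteq> {}" unfolding S_def using set_pmf_not_empty[of P] by simp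
  have finS: "finite S" unfolding S_def using fin by simp
  have m0: "m > 0" unfolding m_def using Sne finS by (simp add: card_gt_0_iff)
  have cardSA: "card S \<le> card A" using A S_def by (simp add: card_mono)
  have Em: "EE P (\<lambda>\<omega>. 1 / pf P f \<omega>) = m" unfolding m_def S_def by (rule EE_inv_pf[OF fin])
  define d where "d = (\<lambda>\<omega>. ln ((1 / pf P f \<omega>) / m) - ((1 / pf P f \<omega>) / m - 1))"
  have dle: "d \<omega> \<le> 0" if "\<omega> \<in> set_pmf P" for \<omega>
  proof -
    have "(1 / pf P f \<omega>) / m > 0" using pf_pos[OF that, of f] m0 by simp
    thus ?thesis unfolding d_def using ln_le_minus_one by smt
  qed
  have "EE P d = EE P (\<lambda>\<omega>. ln (1 / pf P f \<omega>)) - ln m - (EE P (\<lambda>\<omega>. 1 / pf P f \<omega>) / m - 1)"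
  proof -
    have "EE P d = EE P (\<lambda>\<omega>. ln (1 / pf P f \<omega>) - ln m - ((1 / m) * (1 / pf P f \<omega>) - 1))"
      unfolding d_def
    proof (intro EE_cong)
      fix \<omega> assume "\<omega> \<in> set_pmf P"
      hence p: "pf P f \<omega> > 0" by (rule pf_pos)
      thus "ln (1 / pf P f \<omega> / m) - (1 / pf P f \<omega> / m - 1) = ln (1 / pf P f \<omega>) - ln m - (1 / m * (1 / pf P f \<omega>) - 1)"
        using m0 by (simp add: ln_div ln_mult mult.commute)
    qed
    also have "\<dots> = EE P (\<lambda>\<omega>. ln (1 / pf P f \<omega>)) - ln m - ((1 / m) * EE P (\<lambda>\<omega>. 1 / pf P f \<omega>) - 1)"
      using fin by (simp only: EE_diff EE_const EE_cmult)
    finally show ?thesis by simp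
  qed
  also have "\<dots> = EE P (\<lambda>\<omega>. ln (1 / pf P f \<omega>)) - ln m" using Em m0 by simp
  finally have Ed: "EE P d = EE P (\<lambda>\<omega>. ln (1 / pf P f \<omega>)) - ln m" .
  have "EE P (\<lambda>\<omega>. ln (1 / pf P f \<omega>)) = ln 2 * ent P f"
    unfolding ent_alt log_def by (simp add: EE_cmult[symmetric])
  also have "\<dots> \<ge> ln 2 * log 2 (card A)" using H by simp
  also have "ln 2 * log 2 (card A) \<ge> ln 2 * log 2 m"
  proof -
    have "m \<le> card A" using cardSA m_def by simp
    thus ?thesis using m0 by simp
  qed
  finally have "EE P d \<ge> 0" using Ed m0 by (simp add: log_def)
  moreover have "EE P d \<le> 0" unfolding EE_def using dle by (auto intro!: sum_nonpos mult_nonneg_nonpos)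
  ultimately have "EE P d = 0" by simp
  hence "(\<Sum>\<omega>\<in>set_pmf P. - (pmf P \<omega> * d \<omega>)) = 0" unfolding EE_def by (simp add: sum_negf)
  hence all0: "\<forall>\<omega>\<in>set_pmf P. pmf P \<omega> * d \<omega> = 0"
    using fin dle
    by (subst (asm) sum_nonneg_eq_0_iff) (auto intro: mult_nonneg_nonpos)
  have pfm: "pf P f \<omega> = 1 / m" if w: "\<omega> \<in> set_pmf P" for \<omega>
  proof -
    have "pmf P \<omega> \<noteq> 0" using w by (simp add: set_pmf_eq)
    hence "d \<omega> = 0" using all0 w by auto
    hence "ln ((1 / pf P f \<omega>) / m) = (1 / pf P f \<omega>) / m - 1" unfolding d_def by simp
    hence "(1 / pf P f \<omega>) / m = 1" using pf_pos[OF w, of f] m0 by (intro ln_eq_minus_one) auto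
    thus ?thesis using m0 pf_pos[OF w, of f] by (simp add: field_simps)
  qed
  have "log 2 (card A) \<le> log 2 m"
  proof -
    have "ent P f = EE P (\<lambda>\<omega>. log 2 m)" unfolding ent_alt by (intro EE_cong) (simp add: pfm)
    thus ?thesis using H fin by (simp add: EE_const)
  qed
  hence "card A \<le> card S" using m0 m_def cardSA by simp
  hence SA: "S = A" using A S_def cardSA by (metis card_subset_eq le_antisym)
  have Ane: "A \<noteq> {}" using SA Sne by simp
  show ?thesis
  proof (rule pmf_eqI)
    fix y
    show "pmf (map_pmf f P) y = pmf (pmf_of_set A) y"
    proof (cases "y \<in> A")
      case True
      then obtain \<omega> where w: "\<omega> \<in> set_pmf P" "y = f \<omega>" using SA S_def by auto
      have "pmf (map_pmf f P) y = 1 / m" using pfm[OF w(1)] w(2) unfolding pf_def by simp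
      thus ?thesis using True A Ane SA m_def by simp
    next
      case False
      hence "y \<notin> set_pmf (map_pmf f P)" using SA S_def by auto
      thus ?thesis using False A Ane by (simp add: set_pmf_eq)
    qed
  qed
qed

lemma pmf_bind_pair:
  "pmf (bind_pmf M (\<lambda>x. map_pmf (Pair x) (K x))) (x0, y0) = pmf M x0 * pmf (K x0) y0"
proof -
  have "pmf (bind_pmf M (\<lambda>x. map_pmf (Pair x) (K x))) (x0, y0)
     = measure_pmf.expectation M (\<lambda>x. indicator {x0} x * pmf (K x0) y0)"
    unfolding pmf_bind
  proof (intro Bochner_Integration.integral_cong refl)
    fix x
    show "pmf (map_pmf (Pair x) (K x)) (x0, y0) = indicator {x0} x * pmf (K x0) y0"
    proof (cases "x = x0")
      case True thus ?thesis by (simp add: pmf_map_inj' inj_on_def)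
    next
      case False
      hence "(x0, y0) \<notin> set_pmf (map_pmf (Pair x) (K x))" by auto
      thus ?thesis using False by (simp add: set_pmf_eq)
    qed
  qed
  also have "\<dots> = pmf M x0 * pmf (K x0) y0" by (simp add: measure_pmf_single)
  finally show ?thesis .
qed

lemma ent_kernel:
  assumes fin: "finite (set_pmf P)"
    and M: "map_pmf (\<lambda>\<omega>. (f \<omega>, g \<omega>)) P = bind_pmf (map_pmf f P) (\<lambda>x. map_pmf (Pair x) (K x))"
  shows "ent P (\<lambda>\<omega>. (f \<omega>, g \<omega>)) = ent P f + EE P (\<lambda>\<omega>. - log 2 (pmf (K (f \<omega>)) (g \<omega>)))"
proof -
  have "ent P (\<lambda>\<omega>. (f \<omega>, g \<omega>)) = EE P (\<lambda>\<omega>. - log 2 (pf P f \<omega>) + - log 2 (pmf (K (f \<omega>)) (g \<omega>)))"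
    unfolding ent_def
  proof (rule EE_cong)
    fix \<omega> assume w: "\<omega> \<in> set_pmf P"
    have e: "pf P (\<lambda>\<omega>. (f \<omega>, g \<omega>)) \<omega> = pf P f \<omega> * pmf (K (f \<omega>)) (g \<omega>)"
      unfolding pf_def M pmf_bind_pair ..
    have "pf P f \<omega> * pmf (K (f \<omega>)) (g \<omega>) > 0" using pf_pos[OF w, of "\<lambda>\<omega>. (f \<omega>, g \<omega>)"] e by simp
    hence "pmf (K (f \<omega>)) (g \<omega>) > 0" using pf_pos[OF w, of f] by (simp add: zero_less_mult_iff)
    thus "- log 2 (pf P (\<lambda>\<omega>. (f \<omega>, g \<omega>)) \<omega>) = - log 2 (pf P f \<omega>) + - log 2 (pmf (K (f \<omega>)) (g \<omega>))"
      unfolding e using pf_pos[OF w, of f] by (simp add: log_mult)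
  qed
  thus ?thesis unfolding ent_def by (simp only: EE_add)
qed

lemma mi_ent:
  assumes fin: "finite (set_pmf P)"
  shows "mi (map_pmf (\<lambda>\<omega>. (f \<omega>, g \<omega>)) P) = ent P f + ent P g - ent P (\<lambda>\<omega>. (f \<omega>, g \<omega>))"
proof -
  define Q where "Q = map_pmf (\<lambda>\<omega>. (f \<omega>, g \<omega>)) P"
  have "mi Q = EE Q (\<lambda>xy. log 2 (pmf Q xy / (pmf (map_pmf fst Q) (fst xy) * pmf (map_pmf snd Q) (snd xy))))"
    unfolding mi_def EE_def ..
  also have "\<dots> = EE P (\<lambda>\<omega>. log 2 (pf P (\<lambda>\<omega>. (f \<omega>, g \<omega>)) \<omega> / (pf P f \<omega> * pf P g \<omega>)))"
    unfolding Q_def using fin by (simp add: EE_map map_pmf_comp pf_def)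
  also have "\<dots> = EE P (\<lambda>\<omega>. (- log 2 (pf P f \<omega>) + - log 2 (pf P g \<omega>)) - - log 2 (pf P (\<lambda>\<omega>. (f \<omega>, g \<omega>)) \<omega>))"
  proof (rule EE_cong)
    fix \<omega> assume w: "\<omega> \<in> set_pmf P"
    note p = pf_pos[OF w]
    show "log 2 (pf P (\<lambda>\<omega>. (f \<omega>, g \<omega>)) \<omega> / (pf P f \<omega> * pf P g \<omega>)) =
         (- log 2 (pf P f \<omega>) + - log 2 (pf P g \<omega>)) - - log 2 (pf P (\<lambda>\<omega>. (f \<omega>, g \<omega>)) \<omega>)"
      using p[of f] p[of g] p[of "\<lambda>\<omega>. (f \<omega>, g \<omega>)"] by (simp add: log_divide log_mult)
  qed
  finally show ?thesis unfolding Q_def ent_def by (simp only: EE_add EE_diff)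
qed



lemma ent_const: "finite (set_pmf P) \<Longrightarrow> ent P (\<lambda>\<omega>. c) = 0"
  unfolding ent_def pf_def by (simp add: EE_const)

lemma subadd:
  assumes fin: "finite (set_pmf P)"
  shows "ent P (\<lambda>\<omega>. (a \<omega>, b \<omega>)) \<le> ent P a + ent P b"
proof -
  have "ent P (\<lambda>\<omega>. (a \<omega>, b \<omega>, ())) + ent P (\<lambda>\<omega>. ()) \<le> ent P (\<lambda>\<omega>. (a \<omega>, ())) + ent P (\<lambda>\<omega>. (b \<omega>, ()))"
    by (rule ssa[OF fin])
  moreover have "ent P (\<lambda>\<omega>. (a \<omega>, b \<omega>, ())) = ent P (\<lambda>\<omega>. (a \<omega>, b \<omega>))" by (rule ent_eq_det[OF fin]) auto
  moreover have "ent P (\<lambda>\<omega>. (a \<omega>, ())) = ent P a" by (rule ent_eq_det[OF fin]) auto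
  moreover have "ent P (\<lambda>\<omega>. (b \<omega>, ())) = ent P b" by (rule ent_eq_det[OF fin]) auto
  ultimately show ?thesis using ent_const[OF fin, of "()"] by simp
qed

lemma ent_bool_le1: "finite (set_pmf P) \<Longrightarrow> ent P (f :: 'a \<Rightarrow> bool) \<le> 1"
  using ent_le_log_card[of P UNIV f] by simp

definition restr :: "'i set \<Rightarrow> ('i \<Rightarrow> bool) \<Rightarrow> 'i \<Rightarrow> bool" where
  "restr J x = (\<lambda>j. if j \<in> J then x j else False)"

lemma restr_eq_iff: "restr J x = restr J y \<longleftrightarrow> (\<forall>j\<in>J. x j = y j)"
  unfolding restr_def fun_eq_iff by metis

lemma ent_restr_le:
  assumes fin: "finite (set_pmf P)" and J: "finite J"
  shows "ent P (\<lambda>\<omega>. restr J (b \<omega>)) \<le> card J"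
  using J
proof (induction J rule: finite_induct)
  case empty
  show ?case by (simp add: restr_def ent_const[OF fin])
next
  case (insert j J)
  have "ent P (\<lambda>\<omega>. restr (insert j J) (b \<omega>)) = ent P (\<lambda>\<omega>. (b \<omega> j, restr J (b \<omega>)))"
    by (rule ent_eq_det[OF fin]) (auto simp: restr_eq_iff)
  also have "\<dots> \<le> ent P (\<lambda>\<omega>. b \<omega> j) + ent P (\<lambda>\<omega>. restr J (b \<omega>))" by (rule subadd[OF fin])
  also have "\<dots> \<le> 1 + card J" using ent_bool_le1[OF fin] insert.IH by (simp add: add_mono)
  finally show ?case using insert by simp
qed

lemma ent_restr_union:
  assumes fin: "finite (set_pmf P)" and d: "J1 \<inter> J2 = {}"
  shows "ent P (\<lambda>\<omega>. restr (J1 \<union> J2) (b \<omega>)) = ent P (\<lambda>\<omega>. (restr J1 (b \<omega>), restr J2 (b \<omega>)))"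
  by (rule ent_eq_det[OF fin]) (auto simp: restr_eq_iff)

lemma restr_max_sub:
  assumes fin: "finite (set_pmf P)" and J: "finite J" and M: "ent P (\<lambda>\<omega>. restr J (b \<omega>)) \<ge> card J"
    and sub: "J1 \<subseteq> J"
  shows "ent P (\<lambda>\<omega>. restr J1 (b \<omega>)) = card J1"
proof -
  have J1: "finite J1" using J sub finite_subset by blast
  have "J = J1 \<union> (J - J1)" using sub by blast
  hence "ent P (\<lambda>\<omega>. restr J (b \<omega>)) = ent P (\<lambda>\<omega>. (restr J1 (b \<omega>), restr (J - J1) (b \<omega>)))"
    using ent_restr_union[OF fin, of J1 "J - J1" b] by simp
  also have "\<dots> \<le> ent P (\<lambda>\<omega>. restr J1 (b \<omega>)) + ent P (\<lambda>\<omega>. restr (J - J1) (b \<omega>))" by (rule subadd[OF fin])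
  also have "\<dots> \<le> ent P (\<lambda>\<omega>. restr J1 (b \<omega>)) + card (J - J1)"
    using ent_restr_le[OF fin, of "J - J1" b] J by simp
  finally have "card J \<le> ent P (\<lambda>\<omega>. restr J1 (b \<omega>)) + card (J - J1)" using M by simp
  moreover have "card (J - J1) = card J - card J1" using J sub by (simp add: card_Diff_subset J1)
  moreover have "card J1 \<le> card J" using J sub by (simp add: card_mono)
  ultimately have "ent P (\<lambda>\<omega>. restr J1 (b \<omega>)) \<ge> card J1" by (simp add: of_nat_diff)
  thus ?thesis using ent_restr_le[OF fin J1, of b] by simp
qed

lemma restr_max_indep:
  assumes fin: "finite (set_pmf P)" and J: "finite J" and M: "ent P (\<lambda>\<omega>. restr J (b \<omega>)) \<ge> card J"
    and sub: "J1 \<subseteq> J" "J2 \<subseteq> J" and d: "J1 \<inter> J2 = {}"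
  shows "ent P (\<lambda>\<omega>. (restr J1 (b \<omega>), restr J2 (b \<omega>))) = ent P (\<lambda>\<omega>. restr J1 (b \<omega>)) + ent P (\<lambda>\<omega>. restr J2 (b \<omega>))"
proof -
  have f: "finite J1" "finite J2" using J sub finite_subset by blast+
  have "ent P (\<lambda>\<omega>. (restr J1 (b \<omega>), restr J2 (b \<omega>))) = ent P (\<lambda>\<omega>. restr (J1 \<union> J2) (b \<omega>))"
    using ent_restr_union[OF fin d] by simp
  also have "\<dots> = card (J1 \<union> J2)" using restr_max_sub[OF fin J M] sub by simp
  also have "\<dots> = card J1 + card J2" using f d by (simp add: card_Un_disjoint)
  also have "\<dots> = ent P (\<lambda>\<omega>. restr J1 (b \<omega>)) + ent P (\<lambda>\<omega>. restr J2 (b \<omega>))"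
    using restr_max_sub[OF fin J M sub(1)] restr_max_sub[OF fin J M sub(2)] by simp
  finally show ?thesis .
qed

lemma mi_mono_left:
  assumes fin: "finite (set_pmf P)"
    and det: "\<And>\<omega> \<omega>'. \<omega> \<in> set_pmf P \<Longrightarrow> \<omega>' \<in> set_pmf P \<Longrightarrow> f' \<omega> = f' \<omega>' \<Longrightarrow> f \<omega> = f \<omega>'"
  shows "ent P f + ent P g - ent P (\<lambda>\<omega>. (f \<omega>, g \<omega>)) \<le> ent P f' + ent P g - ent P (\<lambda>\<omega>. (f' \<omega>, g \<omega>))"
proof -
  have "ent P (\<lambda>\<omega>. (f' \<omega>, g \<omega>, f \<omega>)) + ent P f \<le> ent P (\<lambda>\<omega>. (f' \<omega>, f \<omega>)) + ent P (\<lambda>\<omega>. (g \<omega>, f \<omega>))"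
    by (rule ssa[OF fin])
  moreover have "ent P (\<lambda>\<omega>. (f' \<omega>, g \<omega>, f \<omega>)) = ent P (\<lambda>\<omega>. (f' \<omega>, g \<omega>))"
    by (rule ent_eq_det[OF fin]) (auto dest: det)
  moreover have "ent P (\<lambda>\<omega>. (f' \<omega>, f \<omega>)) = ent P f'"
    by (rule ent_eq_det[OF fin]) (auto dest: det)
  moreover have "ent P (\<lambda>\<omega>. (g \<omega>, f \<omega>)) = ent P (\<lambda>\<omega>. (f \<omega>, g \<omega>))"
    by (rule ent_eq_det[OF fin]) auto
  ultimately show ?thesis by simp
qed

lemma mi_mono_right:
  assumes fin: "finite (set_pmf P)"
    and det: "\<And>\<omega> \<omega>'. \<omega> \<in> set_pmf P \<Longrightarrow> \<omega>' \<in> set_pmf P \<Longrightarrow> g' \<omega> = g' \<omega>' \<Longrightarrow> g \<omega> = g \<omega>'"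
  shows "ent P f + ent P g - ent P (\<lambda>\<omega>. (f \<omega>, g \<omega>)) \<le> ent P f + ent P g' - ent P (\<lambda>\<omega>. (f \<omega>, g' \<omega>))"
proof -
  have "ent P g + ent P f - ent P (\<lambda>\<omega>. (g \<omega>, f \<omega>)) \<le> ent P g' + ent P f - ent P (\<lambda>\<omega>. (g' \<omega>, f \<omega>))"
    by (rule mi_mono_left[OF fin det])
  moreover have "ent P (\<lambda>\<omega>. (g \<omega>, f \<omega>)) = ent P (\<lambda>\<omega>. (f \<omega>, g \<omega>))" by (rule ent_eq_det[OF fin]) auto
  moreover have "ent P (\<lambda>\<omega>. (g' \<omega>, f \<omega>)) = ent P (\<lambda>\<omega>. (f \<omega>, g' \<omega>))" by (rule ent_eq_det[OF fin]) auto
  ultimately show ?thesis by simp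
qed



lemma per_y_ineq:
  fixes a b :: real assumes a: "a \<ge> 0" and b: "b \<ge> 0" and p: "a + b > 0"
  shows "(a * a + b * b) / (a + b) \<le> 3 / 2 * (a + b) - 2 * sqrt (a * b)"
proof -
  define s where "s = 2 * sqrt (a * b)"
  have ss: "s * s = 4 * (a * b)" unfolding s_def using a b
    by (simp add: mult_nonneg_nonneg algebra_simps)
  have "0 \<le> (a + b - s) * (a + b - s)" by simp
  hence "a * a + b * b \<le> (a + b) * (3 / 2 * (a + b) - s)" using ss by (simp add: algebra_simps)
  thus ?thesis using p unfolding s_def by (simp add: divide_le_eq mult.commute)
qed

lemma pmf_snd_bool:
  fixes R :: "(bool \<times> 'c) pmf"
  shows "pmf (map_pmf snd R) y = pmf R (False, y) + pmf R (True, y)"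
proof -
  have "snd -` {y} = {(False, y), (True, y)}" by auto
  hence "pmf (map_pmf snd R) y = measure R {(False, y), (True, y)}" by (simp add: pmf_map)
  also have "\<dots> = pmf R (False, y) + pmf R (True, y)" by (simp add: measure_measure_pmf_finite)
  finally show ?thesis .
qed

lemma bhatt_ent:
  fixes R :: "(bool \<times> 'c) pmf"
  assumes fin: "finite (set_pmf R)"
  shows "ent R (\<lambda>\<omega>. \<omega>) - ent R snd \<ge> 1 - (2 / ln 2) * (1 - bhatt R)"
proof -
  define Y where "Y = map_pmf snd R"
  define r where "r = (\<lambda>\<omega>. pmf R \<omega> / pmf Y (snd \<omega>))"
  have finY: "finite (set_pmf Y)" unfolding Y_def using fin by simp
  have pY: "pmf Y (snd \<omega>) > 0" if "\<omega> \<in> set_pmf R" for \<omega>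
    unfolding Y_def using that by (simp add: pmf_positive)
  have rpos: "r \<omega> > 0" if "\<omega> \<in> set_pmf R" for \<omega>
    unfolding r_def using pY[OF that] that by (simp add: pmf_positive)
  have e1: "ent R (\<lambda>\<omega>. \<omega>) - ent R snd = EE R (\<lambda>\<omega>. - log 2 (r \<omega>))"
  proof -
    have "EE R (\<lambda>\<omega>. - log 2 (r \<omega>)) = EE R (\<lambda>\<omega>. - log 2 (pf R (\<lambda>\<omega>. \<omega>) \<omega>) - - log 2 (pf R snd \<omega>))"
    proof (rule EE_cong)
      fix \<omega> assume w: "\<omega> \<in> set_pmf R"
      show "- log 2 (r \<omega>) = - log 2 (pf R (\<lambda>\<omega>. \<omega>) \<omega>) - - log 2 (pf R snd \<omega>)"
        unfolding r_def pf_def Y_def using pY[OF w, unfolded Y_def] pmf_positive[OF w]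
        by (simp add: log_divide)
    qed
    thus ?thesis unfolding ent_def by (simp only: EE_diff)
  qed
  have "EE R (\<lambda>\<omega>. - log 2 (r \<omega>)) \<ge> - log 2 (EE R r)"
    using jensen_log[OF fin rpos] EE_minus[of R "\<lambda>\<omega>. log 2 (r \<omega>)"] by simp
  define F where "F = (\<lambda>\<omega>. pmf R \<omega> * pmf R \<omega> / pmf Y (snd \<omega>))"
  have "EE R r = (\<Sum>\<omega>\<in>set_pmf R. F \<omega>)" unfolding EE_def r_def F_def by simp
  also have "\<dots> = (\<Sum>\<omega>\<in>(UNIV::bool set) \<times> set_pmf Y. F \<omega>)"
  proof (rule sum.mono_neutral_left)
    show "finite ((UNIV::bool set) \<times> set_pmf Y)" using finY by (intro finite_cartesian_product) auto
    show "set_pmf R \<subseteq> (UNIV::bool set) \<times> set_pmf Y" unfolding Y_def by force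
    show "\<forall>i\<in>(UNIV::bool set) \<times> set_pmf Y - set_pmf R. F i = 0" unfolding F_def by (simp add: set_pmf_eq)
  qed
  also have "\<dots> = (\<Sum>y\<in>set_pmf Y. F (False, y) + F (True, y))"
  proof -
    have "(\<Sum>\<omega>\<in>(UNIV::bool set) \<times> set_pmf Y. F \<omega>) = (\<Sum>x\<in>(UNIV::bool set). \<Sum>y\<in>set_pmf Y. F (x, y))"
      by (simp add: sum.cartesian_product)
    also have "\<dots> = (\<Sum>y\<in>set_pmf Y. F (False, y)) + (\<Sum>y\<in>set_pmf Y. F (True, y))"
      by (simp add: UNIV_bool)
    finally show ?thesis by (simp add: sum.distrib)
  qed
  also have "\<dots> \<le> (\<Sum>y\<in>set_pmf Y. 3 / 2 * pmf Y y - 2 * sqrt (pmf R (False, y) * pmf R (True, y)))"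
  proof (rule sum_mono)
    fix y assume y: "y \<in> set_pmf Y"
    have py: "pmf Y y = pmf R (False, y) + pmf R (True, y)" unfolding Y_def by (rule pmf_snd_bool)
    have "pmf Y y > 0" using y by (simp add: pmf_positive)
    hence "(pmf R (False, y) * pmf R (False, y) + pmf R (True, y) * pmf R (True, y)) / (pmf R (False, y) + pmf R (True, y))
        \<le> 3 / 2 * (pmf R (False, y) + pmf R (True, y)) - 2 * sqrt (pmf R (False, y) * pmf R (True, y))"
      using py by (intro per_y_ineq) auto
    thus "F (False, y) + F (True, y) \<le> 3 / 2 * pmf Y y - 2 * sqrt (pmf R (False, y) * pmf R (True, y))"
      unfolding F_def using py by (simp add: add_divide_distrib)
  qed
  also have "\<dots> = 3 / 2 - bhatt R"
  proof -
    have "bhatt R = 2 * (\<Sum>y\<in>set_pmf Y. sqrt (pmf R (False, y) * pmf R (True, y)))"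
      unfolding bhatt_def Let_def Y_def[symmetric]
    proof (intro arg_cong[where f="\<lambda>x. 2 * x"] sum.cong refl)
      fix y assume y: "y \<in> set_pmf Y"
      have p: "pmf Y y > 0" using y by (simp add: pmf_positive)
      have "sqrt (pmf R (False, y) / pmf Y y * (pmf R (True, y) / pmf Y y))
          = sqrt (pmf R (False, y) * pmf R (True, y)) / pmf Y y"
        using p by (simp add: real_sqrt_divide real_sqrt_mult power2_eq_square[symmetric])
      thus "pmf Y y * sqrt (pmf R (False, y) / pmf Y y * (pmf R (True, y) / pmf Y y))
          = sqrt (pmf R (False, y) * pmf R (True, y))" using p by simp
    qed
    moreover have "(\<Sum>y\<in>set_pmf Y. pmf Y y) = 1" using finY by (simp add: sum_pmf_eq_1)
    moreover have "(\<Sum>y\<in>set_pmf Y. 3 / 2 * pmf Y y) = 3 / 2 * (\<Sum>y\<in>set_pmf Y. pmf Y y)"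
      by (rule sum_distrib_left[symmetric])
    ultimately show ?thesis by (simp only: sum_subtractf sum_distrib_left[symmetric])
  qed
  finally have Er: "EE R r \<le> 1 / 2 + (1 - bhatt R)" by simp
  have Epos: "EE R r > 0" by (rule EE_pos[OF fin rpos])
  have "- log 2 (EE R r) \<ge> - log 2 (1 / 2 + (1 - bhatt R))" using Er Epos by simp
  moreover have "- log 2 (1 / 2 + (1 - bhatt R)) \<ge> 1 - (2 / ln 2) * (1 - bhatt R)"
  proof -
    define d where "d = 1 - bhatt R"
    have d: "1 + 2 * d > 0" using Er Epos d_def by simp
    have eq: "1 / 2 + d = (1 + 2 * d) / 2" by simp
    have "log 2 (1 / 2 + d) = log 2 ((1 + 2 * d) / 2)" by (simp only: eq)
    also have "\<dots> = log 2 (1 + 2 * d) - 1" using d by (subst log_divide) auto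
    finally have "log 2 (1 / 2 + d) = log 2 (1 + 2 * d) - 1" .
    moreover have "ln (1 + 2 * d) \<le> 2 * d" using ln_le_minus_one[OF d] by simp
    hence "log 2 (1 + 2 * d) \<le> 2 / ln 2 * d" unfolding log_def by (simp add: divide_right_mono)
    ultimately show ?thesis unfolding d_def[symmetric] by simp
  qed
  ultimately show ?thesis using e1 \<open>EE R (\<lambda>\<omega>. - log 2 (r \<omega>)) \<ge> - log 2 (EE R r)\<close> by simp
qed



lemma chan_set: "set_pmf (chan_list Ws xs) \<subseteq> {ys. length ys \<le> length xs}"
  by (induction Ws xs rule: chan_list.induct) fastforce+

lemma finite_chan: "finite (set_pmf (chan_list (Ws :: ('x \<Rightarrow> 'y::finite pmf) list) xs))"
proof -
  have "finite {ys :: 'y list. set ys \<subseteq> UNIV \<and> length ys \<le> length xs}"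
    by (rule finite_lists_length_le) simp
  hence "finite {ys :: 'y list. length ys \<le> length xs}" by simp
  thus ?thesis using chan_set[of Ws xs] finite_subset by blast
qed

lemma finite_bvec: "finite {u :: bool list. length u = N}"
  using finite_lists_length_eq[of "UNIV :: bool set" N] by simp

lemma set_unif_vec: "set_pmf (unif_vec N) = {u. length u = N}"
proof -
  have "replicate N False \<in> {u. length u = N}" by simp
  hence "{u :: bool list. length u = N} \<noteq> {}" by blast
  thus ?thesis unfolding unif_vec_def using finite_bvec by simp
qed

lemma polar_joint_set: "set_pmf (polar_joint n Ws) \<subseteq> {\<omega>. length (fst \<omega>) = 2 ^ n}"
  unfolding polar_joint_def by (auto simp: set_unif_vec)

lemma finite_polar_joint: "finite (set_pmf (polar_joint n (Ws :: (bool \<Rightarrow> 'y::finite pmf) list)))"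
  unfolding polar_joint_def using finite_bvec by (auto simp: set_unif_vec intro!: finite_chan)

lemma take_eq_iff: "k \<le> length u \<Longrightarrow> k \<le> length u' \<Longrightarrow> take k u = take k u' \<longleftrightarrow> (\<forall>i<k. u ! i = u' ! i)"
  by (simp add: list_eq_iff_nth_eq min_absorb2)

locale polarQ =
  fixes Q :: "(bool list \<times> 'z) pmf" and N :: nat
  assumes finQ: "finite (set_pmf Q)" and lenQ: "\<And>\<omega>. \<omega> \<in> set_pmf Q \<Longrightarrow> length (fst \<omega>) = N"
begin

definition D :: "nat \<Rightarrow> real" where
  "D i = ent Q (\<lambda>\<omega>. (take (Suc i) (fst \<omega>), snd \<omega>)) - ent Q (\<lambda>\<omega>. (take i (fst \<omega>), snd \<omega>))"

lemma D_bhatt: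
  assumes i: "i < N"
  shows "D i \<ge> 1 - (2 / ln 2) * (1 - bhatt (map_pmf (\<lambda>(u, y). (u ! i, (take i u, y))) Q))"
proof -
  define g where "g = (\<lambda>(u :: bool list, y :: 'z). (u ! i, (take i u, y)))"
  define R where "R = map_pmf g Q"
  have finR: "finite (set_pmf R)" unfolding R_def using finQ by simp
  have "ent R (\<lambda>\<omega>. \<omega>) - ent R snd \<ge> 1 - (2 / ln 2) * (1 - bhatt R)" by (rule bhatt_ent[OF finR])
  moreover have "ent R (\<lambda>\<omega>. \<omega>) = ent Q (\<lambda>\<omega>. (take (Suc i) (fst \<omega>), snd \<omega>))"
  proof -
    have "ent R (\<lambda>\<omega>. \<omega>) = ent Q g" unfolding R_def using finQ by (simp add: ent_map)
    also have "\<dots> = ent Q (\<lambda>\<omega>. (take (Suc i) (fst \<omega>), snd \<omega>))"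
    proof (rule ent_eq_det[OF finQ])
      fix \<omega> \<omega>' assume w: "\<omega> \<in> set_pmf Q" "\<omega>' \<in> set_pmf Q"
      have l: "length (fst \<omega>) = N" "length (fst \<omega>') = N" using lenQ w by auto
      show "g \<omega>' = g \<omega> \<longleftrightarrow> (take (Suc i) (fst \<omega>'), snd \<omega>') = (take (Suc i) (fst \<omega>), snd \<omega>)"
        unfolding g_def using l i by (auto simp: split_beta take_eq_iff less_Suc_eq)
    qed
    finally show ?thesis .
  qed
  moreover have "ent R snd = ent Q (\<lambda>\<omega>. (take i (fst \<omega>), snd \<omega>))"
    unfolding R_def using finQ by (simp add: ent_map g_def split_beta)
  ultimately show ?thesis unfolding D_def R_def g_def by simp
qed

definition uR :: "nat set \<Rightarrow> bool list \<times> 'z \<Rightarrow> nat \<Rightarrow> bool" where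
  "uR J \<omega> = restr J (\<lambda>i. fst \<omega> ! i)"

lemma telescope:
  assumes k: "k \<le> N"
  shows "ent Q (\<lambda>\<omega>. (uR (H \<inter> {..<k}) \<omega>, snd \<omega>)) - ent Q snd \<ge> (\<Sum>i\<in>H \<inter> {..<k}. D i)"
  using k
proof (induction k)
  case 0
  have "ent Q (\<lambda>\<omega>. (uR (H \<inter> {..<0}) \<omega>, snd \<omega>)) = ent Q snd"
    by (rule ent_eq_det[OF finQ]) (auto simp: uR_def restr_def)
  thus ?case by simp
next
  case (Suc k)
  hence kN: "k < N" by simp
  show ?case
  proof (cases "k \<in> H")
    case False
    hence "H \<inter> {..<Suc k} = H \<inter> {..<k}" using less_Suc_eq by auto
    thus ?thesis using Suc kN by simp
  next
    case True
    define S where "S = H \<inter> {..<k}"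
    have ins: "H \<inter> {..<Suc k} = insert k S" unfolding S_def using True less_Suc_eq by auto
    have kS: "k \<notin> S" unfolding S_def by simp
    define a where "a = (\<lambda>\<omega> :: bool list \<times> 'z. fst \<omega> ! k)"
    define b where "b = (\<lambda>\<omega> :: bool list \<times> 'z. uR ({..<k} - S) \<omega>)"
    define c where "c = (\<lambda>\<omega> :: bool list \<times> 'z. (uR S \<omega>, snd \<omega>))"
    have ss: "ent Q (\<lambda>\<omega>. (a \<omega>, b \<omega>, c \<omega>)) + ent Q c \<le> ent Q (\<lambda>\<omega>. (a \<omega>, c \<omega>)) + ent Q (\<lambda>\<omega>. (b \<omega>, c \<omega>))"
      by (rule ssa[OF finQ])
    have e1: "ent Q (\<lambda>\<omega>. (a \<omega>, b \<omega>, c \<omega>)) = ent Q (\<lambda>\<omega>. (take (Suc k) (fst \<omega>), snd \<omega>))"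
    proof (rule ent_eq_det[OF finQ])
      fix \<omega> \<omega>' assume w: "\<omega> \<in> set_pmf Q" "\<omega>' \<in> set_pmf Q"
      have l: "length (fst \<omega>) = N" "length (fst \<omega>') = N" using lenQ w by auto
      have "(a \<omega>', b \<omega>', c \<omega>') = (a \<omega>, b \<omega>, c \<omega>) \<longleftrightarrow> (\<forall>i<Suc k. fst \<omega>' ! i = fst \<omega> ! i) \<and> snd \<omega>' = snd \<omega>"
        unfolding a_def b_def c_def uR_def S_def by (auto simp: restr_eq_iff less_Suc_eq)
      thus "(a \<omega>', b \<omega>', c \<omega>') = (a \<omega>, b \<omega>, c \<omega>) \<longleftrightarrow> (take (Suc k) (fst \<omega>'), snd \<omega>') = (take (Suc k) (fst \<omega>), snd \<omega>)"
        using l kN by (simp add: take_eq_iff)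
    qed
    have e2: "ent Q (\<lambda>\<omega>. (b \<omega>, c \<omega>)) = ent Q (\<lambda>\<omega>. (take k (fst \<omega>), snd \<omega>))"
    proof (rule ent_eq_det[OF finQ])
      fix \<omega> \<omega>' assume w: "\<omega> \<in> set_pmf Q" "\<omega>' \<in> set_pmf Q"
      have l: "length (fst \<omega>) = N" "length (fst \<omega>') = N" using lenQ w by auto
      have "(b \<omega>', c \<omega>') = (b \<omega>, c \<omega>) \<longleftrightarrow> (\<forall>i<k. fst \<omega>' ! i = fst \<omega> ! i) \<and> snd \<omega>' = snd \<omega>"
        unfolding b_def c_def uR_def S_def by (auto simp: restr_eq_iff)
      thus "(b \<omega>', c \<omega>') = (b \<omega>, c \<omega>) \<longleftrightarrow> (take k (fst \<omega>'), snd \<omega>') = (take k (fst \<omega>), snd \<omega>)"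
        using l kN by (simp add: take_eq_iff)
    qed
    have e3: "ent Q (\<lambda>\<omega>. (a \<omega>, c \<omega>)) = ent Q (\<lambda>\<omega>. (uR (H \<inter> {..<Suc k}) \<omega>, snd \<omega>))"
      unfolding ins a_def c_def uR_def by (rule ent_eq_det[OF finQ]) (auto simp: restr_eq_iff)
    have "D k \<le> ent Q (\<lambda>\<omega>. (uR (H \<inter> {..<Suc k}) \<omega>, snd \<omega>)) - ent Q (\<lambda>\<omega>. (uR S \<omega>, snd \<omega>))"
      using ss e1 e2 e3 unfolding D_def c_def by simp
    moreover have "(\<Sum>i\<in>H \<inter> {..<Suc k}. D i) = D k + (\<Sum>i\<in>S. D i)"
      unfolding ins using kS by (simp add: S_def)
    ultimately show ?thesis using Suc.IH kN unfolding S_def by simp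
  qed
qed

lemma polar_mi:
  assumes H: "H \<subseteq> {..<N}" and Hb: "\<And>i. i \<in> H \<Longrightarrow> bhatt (map_pmf (\<lambda>(u, y). (u ! i, (take i u, y))) Q) \<ge> 1 - \<delta>"
  shows "ent Q (uR H) + ent Q snd - ent Q (\<lambda>\<omega>. (uR H \<omega>, snd \<omega>)) \<le> card H * (2 / ln 2 * \<delta>)"
proof -
  have finH: "finite H" using H finite_subset by blast
  have HN: "H \<inter> {..<N} = H" using H by auto
  have t: "ent Q (\<lambda>\<omega>. (uR H \<omega>, snd \<omega>)) - ent Q snd \<ge> (\<Sum>i\<in>H. D i)"
    using telescope[of N H] HN by simp
  have "(\<Sum>i\<in>H. D i) \<ge> (\<Sum>i\<in>H. 1 - 2 / ln 2 * \<delta>)"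
  proof (rule sum_mono)
    fix i assume i: "i \<in> H"
    have "D i \<ge> 1 - (2 / ln 2) * (1 - bhatt (map_pmf (\<lambda>(u, y). (u ! i, (take i u, y))) Q))"
      using D_bhatt i H by auto
    moreover have "(2 / ln 2) * (1 - bhatt (map_pmf (\<lambda>(u, y). (u ! i, (take i u, y))) Q)) \<le> 2 / ln 2 * \<delta>"
      using Hb[OF i] by (intro mult_left_mono) auto
    ultimately show "1 - 2 / ln 2 * \<delta> \<le> D i" by simp
  qed
  moreover have "ent Q (uR H) \<le> card H" unfolding uR_def using ent_restr_le[OF finQ finH] by simp
  ultimately show ?thesis using t by (simp add: algebra_simps)
qed

end



definition stepvec :: "nat \<Rightarrow> nat set \<Rightarrow> nat set \<Rightarrow> (nat \<Rightarrow> nat) \<Rightarrow> bool list \<Rightarrow> bool list \<Rightarrow> bool list" where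
  "stepvec N L Ip sg u w = map (\<lambda>i. if i \<in> L then (if i \<in> Ip then w ! i \<noteq> u ! i else w ! i) else u ! (sg i)) [0..<N]"

definition xorvec :: "nat \<Rightarrow> nat set \<Rightarrow> bool list \<Rightarrow> bool list \<Rightarrow> bool list" where
  "xorvec N Ip u w = map (\<lambda>i. if i \<in> Ip then w ! i \<noteq> u ! i else w ! i) [0..<N]"

lemma scheme_step_eq: "scheme_step n L Ip sg u = map_pmf (stepvec (2 ^ n) L Ip sg u) (unif_vec (2 ^ n))"
  by (simp add: scheme_step_def stepvec_def map_pmf_def)

lemma xorvec_invol: "length w = N \<Longrightarrow> xorvec N Ip u (xorvec N Ip u w) = w"
  unfolding xorvec_def by (intro nth_equalityI) auto

lemma map_xorvec_unif: "map_pmf (xorvec N Ip u) (unif_vec N) = unif_vec N"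
proof -
  have ne: "{w :: bool list. length w = N} \<noteq> {}" by (auto intro: exI[of _ "replicate N False"])
  have inj: "inj_on (xorvec N Ip u) {w. length w = N}"
    by (rule inj_on_inverseI[where g="xorvec N Ip u"]) (rule xorvec_invol, simp)
  have img: "xorvec N Ip u ` {w. length w = N} = {w. length w = N}"
  proof
    show "xorvec N Ip u ` {w. length w = N} \<subseteq> {w. length w = N}" by (auto simp: xorvec_def)
    show "{w. length w = N} \<subseteq> xorvec N Ip u ` {w. length w = N}"
    proof
      fix w :: "bool list" assume "w \<in> {w. length w = N}"
      hence "w = xorvec N Ip u (xorvec N Ip u w)" "length (xorvec N Ip u w) = N"
        by (simp_all add: xorvec_invol) (simp add: xorvec_def)
      thus "w \<in> xorvec N Ip u ` {w. length w = N}" by blast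
    qed
  qed
  show ?thesis unfolding unif_vec_def using map_pmf_of_set_inj[OF inj ne finite_bvec] img by simp
qed

locale scheme =
  fixes n :: nat and L :: "nat set" and Ip :: "nat \<Rightarrow> nat set" and sig :: "nat \<Rightarrow> nat \<Rightarrow> nat"
    and Wzl :: "nat \<Rightarrow> (bool \<Rightarrow> 'z::finite pmf) list"
begin

abbreviation "NN \<equiv> (2::nat) ^ n"

abbreviation P :: "nat \<Rightarrow> (bool list \<times> 'z list) list pmf" where
  "P t \<equiv> scheme_run n L Ip sig Wzl t"

abbreviation C :: "nat \<Rightarrow> bool list \<Rightarrow> 'z list pmf" where
  "C t u \<equiv> chan_list (Wzl t) (polar_enc n u)"

abbreviation sv :: "nat \<Rightarrow> bool list \<Rightarrow> bool list \<Rightarrow> bool list" where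
  "sv t u \<equiv> stepvec NN L (Ip t) (sig (Suc t)) u"

lemma P_Suc: "P (Suc t) = bind_pmf (P t) (\<lambda>h. bind_pmf (map_pmf (sv t (fst (last h))) (unif_vec NN))
     (\<lambda>u'. map_pmf (\<lambda>z. h @ [(u', z)]) (C (Suc t) u')))"
  by (simp add: scheme_step_eq map_pmf_def)

lemma P_0: "P 0 = bind_pmf (unif_vec NN) (\<lambda>u. map_pmf (\<lambda>z. [(u, z)]) (C 0 u))"
  by (simp add: map_pmf_def)

lemma finP: "finite (set_pmf (P t))"
proof (induction t)
  case 0
  show ?case unfolding P_0 using finite_bvec by (auto simp: set_unif_vec intro!: finite_chan)
next
  case (Suc t)
  show ?case unfolding P_Suc using Suc finite_bvec by (auto simp: set_unif_vec intro!: finite_chan)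
qed

lemma supp_Suc:
  assumes "h' \<in> set_pmf (P (Suc t))"
  obtains h w z where "h \<in> set_pmf (P t)" "length w = NN" "h' = h @ [(sv t (fst (last h)) w, z)]"
  using assms unfolding P_Suc by (auto simp: set_unif_vec)

lemma suppP: "h \<in> set_pmf (P t) \<Longrightarrow> length h = Suc t \<and> (\<forall>s\<le>t. length (fst (h ! s)) = NN)"
proof (induction t arbitrary: h)
  case 0
  thus ?case unfolding P_0 by (auto simp: set_unif_vec)
next
  case (Suc t)
  from supp_Suc[OF Suc.prems] obtain h0 w z where
    h0: "h0 \<in> set_pmf (P t)" "length w = NN" "h = h0 @ [(sv t (fst (last h0)) w, z)]" .
  have IH: "length h0 = Suc t" "\<forall>s\<le>t. length (fst (h0 ! s)) = NN" using Suc.IH[OF h0(1)] by auto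
  show ?case
  proof (intro conjI allI impI)
    show "length h = Suc (Suc t)" using h0 IH by simp
    fix s assume s: "s \<le> Suc t"
    show "length (fst (h ! s)) = NN"
    proof (cases "s \<le> t")
      case True thus ?thesis using h0 IH by (simp add: nth_append)
    next
      case False
      hence "s = Suc t" using s by simp
      thus ?thesis using h0 IH by (simp add: nth_append stepvec_def)
    qed
  qed
qed

lemma map_bl: "map_pmf butlast (P (Suc t)) = P t"
  unfolding P_Suc by (simp add: map_bind_pmf map_pmf_comp map_pmf_const bind_return_pmf')

lemma markov:
  "map_pmf (\<lambda>h'. ((a (butlast h'), fst (last h')), snd (last h'))) (P (Suc t))
   = bind_pmf (map_pmf (\<lambda>h'. (a (butlast h'), fst (last h'))) (P (Suc t)))
       (\<lambda>x. map_pmf (Pair x) (C (Suc t) (snd x)))"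
  unfolding P_Suc
  by (simp add: map_bind_pmf map_pmf_comp map_pmf_const bind_assoc_pmf bind_return_pmf bind_map_pmf)

end



context scheme begin

abbreviation Yd :: "(nat \<Rightarrow> bool) pmf" where
  "Yd \<equiv> map_pmf (\<lambda>w. restr L (\<lambda>i. w ! i)) (unif_vec NN)"

lemma fresh:
  assumes LN: "L \<subseteq> {..<NN}"
  shows "map_pmf (\<lambda>h'. (a (butlast h'), restr L (\<lambda>i. fst (last h') ! i))) (P (Suc t))
       = bind_pmf (map_pmf a (P t)) (\<lambda>x. map_pmf (Pair x) Yd)"
proof -
  have "map_pmf (\<lambda>h'. (a (butlast h'), restr L (\<lambda>i. fst (last h') ! i))) (P (Suc t))
      = bind_pmf (P t) (\<lambda>h. map_pmf (\<lambda>w. (a h, restr L (\<lambda>i. sv t (fst (last h)) w ! i))) (unif_vec NN))"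
    unfolding P_Suc by (simp add: map_bind_pmf map_pmf_comp map_pmf_const bind_map_pmf bind_return_pmf map_pmf_def[symmetric])
  also have "\<dots> = bind_pmf (P t) (\<lambda>h. map_pmf (Pair (a h)) Yd)"
  proof (rule bind_pmf_cong[OF refl])
    fix h
    have "map_pmf (\<lambda>w. (a h, restr L (\<lambda>i. sv t (fst (last h)) w ! i))) (unif_vec NN)
        = map_pmf (\<lambda>w. (a h, restr L (\<lambda>i. xorvec NN (Ip t) (fst (last h)) w ! i))) (unif_vec NN)"
    proof (rule map_pmf_cong[OF refl])
      fix w assume "w \<in> set_pmf (unif_vec NN)"
      hence lw: "length w = NN" by (simp add: set_unif_vec)
      show "(a h, restr L (\<lambda>i. sv t (fst (last h)) w ! i)) = (a h, restr L (\<lambda>i. xorvec NN (Ip t) (fst (last h)) w ! i))"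
        using LN by (auto simp: restr_def stepvec_def xorvec_def fun_eq_iff)
    qed
    also have "\<dots> = map_pmf (\<lambda>w. (a h, restr L (\<lambda>i. w ! i))) (map_pmf (xorvec NN (Ip t) (fst (last h))) (unif_vec NN))"
      by (simp add: map_pmf_comp)
    also have "\<dots> = map_pmf (Pair (a h)) Yd" unfolding map_xorvec_unif by (simp add: map_pmf_comp)
    finally show "map_pmf (\<lambda>w. (a h, restr L (\<lambda>i. sv t (fst (last h)) w ! i))) (unif_vec NN) = map_pmf (Pair (a h)) Yd" .
  qed
  also have "\<dots> = bind_pmf (map_pmf a (P t)) (\<lambda>x. map_pmf (Pair x) Yd)" by (simp add: bind_map_pmf)
  finally show ?thesis .
qed

end



context scheme begin

abbreviation uL :: "(bool list \<times> 'z list) list \<Rightarrow> bool list" where "uL h \<equiv> fst (last h)"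
abbreviation zL :: "(bool list \<times> 'z list) list \<Rightarrow> 'z list" where "zL h \<equiv> snd (last h)"
abbreviation yL :: "(bool list \<times> 'z list) list \<Rightarrow> nat \<Rightarrow> bool" where "yL h \<equiv> restr L (\<lambda>i. uL h ! i)"

definition Kz :: "nat \<Rightarrow> real" where
  "Kz t = EE (P (Suc t)) (\<lambda>h'. - log 2 (pmf (C (Suc t) (uL h')) (zL h')))"
definition Ky :: "nat \<Rightarrow> real" where
  "Ky t = EE (P (Suc t)) (\<lambda>h'. - log 2 (pmf Yd (yL h')))"

lemma ent_markov:
  "ent (P (Suc t)) (\<lambda>h'. ((a (butlast h'), uL h'), zL h')) = ent (P (Suc t)) (\<lambda>h'. (a (butlast h'), uL h')) + Kz t"
  unfolding Kz_def using ent_kernel[OF finP markov] by simp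

lemma ent_markov0: "ent (P (Suc t)) (\<lambda>h'. (uL h', zL h')) = ent (P (Suc t)) uL + Kz t"
proof -
  have "ent (P (Suc t)) (\<lambda>h'. (((\<lambda>_. ()) (butlast h'), uL h'), zL h')) = ent (P (Suc t)) (\<lambda>h'. ((\<lambda>_. ()) (butlast h'), uL h')) + Kz t"
    by (rule ent_markov)
  moreover have "ent (P (Suc t)) (\<lambda>h'. (((\<lambda>_. ()) (butlast h'), uL h'), zL h')) = ent (P (Suc t)) (\<lambda>h'. (uL h', zL h'))"
    by (rule ent_eq_det[OF finP]) auto
  moreover have "ent (P (Suc t)) (\<lambda>h'. ((\<lambda>_. ()) (butlast h'), uL h')) = ent (P (Suc t)) uL"
    by (rule ent_eq_det[OF finP]) auto
  ultimately show ?thesis by simp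
qed

lemma ent_fresh:
  assumes LN: "L \<subseteq> {..<NN}"
  shows "ent (P (Suc t)) (\<lambda>h'. (a (butlast h'), yL h')) = ent (P (Suc t)) (\<lambda>h'. a (butlast h')) + Ky t"
proof -
  have "map_pmf (\<lambda>h'. a (butlast h')) (P (Suc t)) = map_pmf a (P t)"
    using map_bl[of t] by (metis map_pmf_comp)
  hence M: "map_pmf (\<lambda>h'. (a (butlast h'), yL h')) (P (Suc t))
      = bind_pmf (map_pmf (\<lambda>h'. a (butlast h')) (P (Suc t))) (\<lambda>x. map_pmf (Pair x) Yd)"
    using fresh[OF LN] by simp
  show ?thesis unfolding Ky_def by (rule ent_kernel[OF finP M])
qed

lemma ent_fresh0:
  assumes LN: "L \<subseteq> {..<NN}"
  shows "ent (P (Suc t)) yL = Ky t"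
proof -
  have "ent (P (Suc t)) (\<lambda>h'. ((\<lambda>_. ()) (butlast h'), yL h')) = ent (P (Suc t)) (\<lambda>h'. (\<lambda>_. ()) (butlast h')) + Ky t"
    by (rule ent_fresh[OF LN])
  moreover have "ent (P (Suc t)) (\<lambda>h'. ((\<lambda>_. ()) (butlast h'), yL h')) = ent (P (Suc t)) yL"
    by (rule ent_eq_det[OF finP]) auto
  ultimately show ?thesis using ent_const[OF finP, of "Suc t" "()"] by linarith
qed

lemma ent_lift: "ent (P (Suc t)) (\<lambda>h'. f (butlast h')) = ent (P t) f"
  using ent_map[OF finP, of butlast "Suc t" f] map_bl[of t] by simp

lemma markov_u:
  "map_pmf (\<lambda>h'. (uL h', zL h')) (P (Suc t)) = bind_pmf (map_pmf uL (P (Suc t))) (\<lambda>u. map_pmf (Pair u) (C (Suc t) u))"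
  unfolding P_Suc
  by (simp add: map_bind_pmf map_pmf_comp map_pmf_const bind_assoc_pmf bind_return_pmf bind_map_pmf)

lemma polar_ident:
  assumes "map_pmf uL (P (Suc t)) = unif_vec NN"
  shows "map_pmf (\<lambda>h'. (uL h', zL h')) (P (Suc t)) = polar_joint n (Wzl (Suc t))"
  unfolding markov_u assms polar_joint_def by (simp add: map_pmf_def)

lemma supp_facts:
  assumes "h' \<in> set_pmf (P (Suc t))"
  shows "butlast h' \<in> set_pmf (P t)" "length h' = Suc (Suc t)" "\<And>s. s \<le> t \<Longrightarrow> h' ! s = butlast h' ! s"
    "h' ! Suc t = last h'" "length (uL h') = NN"
    "\<And>i. i < NN \<Longrightarrow> i \<notin> L \<Longrightarrow> uL h' ! i = fst (butlast h' ! t) ! sig (Suc t) i"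
    "\<And>s. s \<le> t \<Longrightarrow> length (fst (butlast h' ! s)) = NN"
proof -
  obtain h w z where h: "h \<in> set_pmf (P t)" "length w = NN" "h' = h @ [(sv t (fst (last h)) w, z)]"
    using supp_Suc[OF assms] by blast
  have lh: "length h = Suc t" "\<And>s. s \<le> t \<Longrightarrow> length (fst (h ! s)) = NN" using suppP[OF h(1)] by auto
  have lasth: "last h = h ! t" using lh by (metis diff_Suc_1 last_conv_nth list.size(3) nat.distinct(1))
  show "butlast h' \<in> set_pmf (P t)" using h by simp
  show "length h' = Suc (Suc t)" using h lh by simp
  show "\<And>s. s \<le> t \<Longrightarrow> h' ! s = butlast h' ! s" using h lh by (simp add: nth_append)
  show "h' ! Suc t = last h'" using h lh by (simp add: nth_append)
  show "length (uL h') = NN" using h by (simp add: stepvec_def)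
  show "\<And>i. i < NN \<Longrightarrow> i \<notin> L \<Longrightarrow> uL h' ! i = fst (butlast h' ! t) ! sig (Suc t) i"
    using h lasth by (simp add: stepvec_def)
  show "\<And>s. s \<le> t \<Longrightarrow> length (fst (butlast h' ! s)) = NN" using h lh by simp
qed

end



definition bitsH :: "(bool list \<times> 'z) list \<Rightarrow> nat \<times> nat \<Rightarrow> bool" where
  "bitsH h = (\<lambda>(s, i). fst (h ! s) ! i)"

lemma card_bvec: "card {u :: bool list. length u = N} = 2 ^ N"
  using card_lists_length_eq[of "UNIV :: bool set" N] by (simp add: card_UNIV_bool)

lemma ent_unif_vec:
  assumes "finite (set_pmf Q)" "map_pmf f Q = unif_vec N"
  shows "ent Q f = N"
proof -
  have ne: "{u :: bool list. length u = N} \<noteq> {}" by (auto intro: exI[of _ "replicate N False"])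
  have "ent Q f = log 2 (card {u :: bool list. length u = N})"
    using assms ent_uniform[OF assms(1) finite_bvec ne] unfolding unif_vec_def by simp
  thus ?thesis by (simp add: card_bvec)
qed

lemma ent_Yd: "ent (map_pmf (\<lambda>w. restr L (\<lambda>i. w ! i)) (unif_vec N)) (\<lambda>x. x) = card L" if "L \<subseteq> {..<N}"
proof -
  have fin: "finite (set_pmf (unif_vec N))" by (simp add: set_unif_vec finite_bvec)
  have "ent (unif_vec N) (\<lambda>w. restr {..<N} (\<lambda>i. w ! i)) = ent (unif_vec N) (\<lambda>w. w)"
    by (rule ent_eq_det[OF fin]) (auto simp: set_unif_vec restr_eq_iff list_eq_iff_nth_eq)
  also have "\<dots> = N" by (rule ent_unif_vec[OF fin]) simp
  finally have "ent (unif_vec N) (\<lambda>w. restr {..<N} (\<lambda>i. w ! i)) \<ge> card {..<N}" by simp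
  from restr_max_sub[OF fin _ this that] have "ent (unif_vec N) (\<lambda>w. restr L (\<lambda>i. w ! i)) = card L" by simp
  thus ?thesis using fin by (simp add: ent_map)
qed

locale scheme_hyp = scheme n L Ip sig Wzl
  for n L Ip sig and Wzl :: "nat \<Rightarrow> (bool \<Rightarrow> 'z::finite pmf) list" +
  fixes Hs Ss :: "nat \<Rightarrow> nat set" and T :: nat and \<delta> :: real
  assumes LN: "L \<subseteq> {..<2 ^ n}" and HN: "\<And>t. t \<le> T \<Longrightarrow> Hs t \<subseteq> {..<2 ^ n}"
    and IpH: "\<And>t. t \<le> T \<Longrightarrow> Ip t \<subseteq> Hs t"
    and SsH: "\<And>t. t < T \<Longrightarrow> Ss t \<subseteq> Hs t" and disj: "\<And>t. t < T \<Longrightarrow> Ip t \<inter> Ss t = {}"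
    and sigbij: "\<And>t. t < T \<Longrightarrow> bij_betw (sig (Suc t)) ({..<2 ^ n} - L) (Ss t)"
    and hb: "\<And>t i. 1 \<le> t \<Longrightarrow> t \<le> T \<Longrightarrow> i \<in> Hs t \<Longrightarrow>
               bhatt (map_pmf (\<lambda>(u, y). (u ! i, (take i u, y))) (polar_joint n (Wzl t))) \<ge> 1 - \<delta>"
    and dpos: "\<delta> \<ge> 0"
begin

definition JK :: "nat \<Rightarrow> (nat \<times> nat) set" where "JK t = {(s, i). s < t \<and> i \<in> Ip s}"
definition JR :: "nat \<Rightarrow> (nat \<times> nat) set" where "JR t = JK t \<union> {t} \<times> {..<NN}"
definition JV :: "nat \<Rightarrow> (nat \<times> nat) set" where "JV t = JK t \<union> {t} \<times> Hs t"
definition Of :: "nat \<Rightarrow> (bool list \<times> 'z list) list \<Rightarrow> 'z list list" where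
  "Of t h = map (\<lambda>s. snd (h ! s)) [1..<Suc t]"

lemma JK_sub: "t \<le> Suc T \<Longrightarrow> JK t \<subseteq> {..<t} \<times> {..<NN}"
proof
  fix x assume t: "t \<le> Suc T" and x: "x \<in> JK t"
  obtain s i where si: "x = (s, i)" "s < t" "i \<in> Ip s" using x unfolding JK_def by auto
  have "s \<le> T" using si t by simp
  hence "i < NN" using IpH HN si by blast
  thus "x \<in> {..<t} \<times> {..<NN}" using si by simp
qed

lemma finJK: "t \<le> Suc T \<Longrightarrow> finite (JK t)"
  using JK_sub finite_subset by blast

lemma finJR: "t \<le> Suc T \<Longrightarrow> finite (JR t)"
  unfolding JR_def using finJK by simp

lemma JK_Suc: "JK (Suc t) = JK t \<union> {t} \<times> Ip t"
  unfolding JK_def using less_Suc_eq by auto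

lemma card_JR: "t \<le> Suc T \<Longrightarrow> card (JR t) = card (JK t) + NN"
proof -
  assume t: "t \<le> Suc T"
  have "JK t \<inter> {t} \<times> {..<NN} = {}" unfolding JK_def by auto
  thus ?thesis unfolding JR_def using finJK[OF t] by (simp add: card_Un_disjoint card_cartesian_product)
qed

lemma bits_bl: "h' \<in> set_pmf (P (Suc t)) \<Longrightarrow> s \<le> t \<Longrightarrow> bitsH h' (s, i) = bitsH (butlast h') (s, i)"
  unfolding bitsH_def using supp_facts by simp

lemma bits_last: "h' \<in> set_pmf (P (Suc t)) \<Longrightarrow> bitsH h' (Suc t, i) = uL h' ! i"
  unfolding bitsH_def using supp_facts by simp

lemma uL_notL: "h' \<in> set_pmf (P (Suc t)) \<Longrightarrow> i < NN \<Longrightarrow> i \<notin> L \<Longrightarrow> uL h' ! i = bitsH (butlast h') (t, sig (Suc t) i)"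
  unfolding bitsH_def using supp_facts by simp

lemma restr_split_last:
  assumes h1: "h1 \<in> set_pmf (P (Suc t))" and h2: "h2 \<in> set_pmf (P (Suc t))"
    and J0: "\<And>s i. (s, i) \<in> J0 \<Longrightarrow> s \<le> t"
  shows "restr (J0 \<union> {Suc t} \<times> K) (bitsH h1) = restr (J0 \<union> {Suc t} \<times> K) (bitsH h2)
     \<longleftrightarrow> restr J0 (bitsH (butlast h1)) = restr J0 (bitsH (butlast h2)) \<and> restr K (\<lambda>i. uL h1 ! i) = restr K (\<lambda>i. uL h2 ! i)"
proof -
  have a: "bitsH h (s, i) = bitsH (butlast h) (s, i)" if "h \<in> set_pmf (P (Suc t))" "(s, i) \<in> J0" for h s i
    using bits_bl[OF that(1) J0[OF that(2)]] .
  show ?thesis unfolding restr_eq_iff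
    using a[OF h1] a[OF h2] bits_last[OF h1] bits_last[OF h2] J0 by fastforce
qed

lemma ent_split_last:
  assumes J0: "\<And>s i. (s, i) \<in> J0 \<Longrightarrow> s \<le> t"
  shows "ent (P (Suc t)) (\<lambda>h'. restr (J0 \<union> {Suc t} \<times> K) (bitsH h'))
       = ent (P (Suc t)) (\<lambda>h'. (restr J0 (bitsH (butlast h')), restr K (\<lambda>i. uL h' ! i)))"
  by (rule ent_eq_det[OF finP]) (simp add: restr_split_last[OF _ _ J0])

end



context scheme_hyp begin

definition MI :: "'a pmf \<Rightarrow> ('a \<Rightarrow> 'b) \<Rightarrow> ('a \<Rightarrow> 'c) \<Rightarrow> real" where
  "MI Q f g = ent Q f + ent Q g - ent Q (\<lambda>\<omega>. (f \<omega>, g \<omega>))"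

lemma base_R: "ent (P 0) (\<lambda>h. restr (JR 0) (bitsH h)) \<ge> card (JR 0)"
proof -
  have JR0: "JR 0 = {0} \<times> {..<NN}" unfolding JR_def JK_def by auto
  have "ent (P 0) (\<lambda>h. restr (JR 0) (bitsH h)) = ent (P 0) (\<lambda>h. fst (h ! 0))"
  proof (rule ent_eq_det[OF finP])
    fix h1 h2 assume h: "h1 \<in> set_pmf (P 0)" "h2 \<in> set_pmf (P 0)"
    have l: "length (fst (h1 ! 0)) = NN" "length (fst (h2 ! 0)) = NN" using suppP[OF h(1)] suppP[OF h(2)] by auto
    show "restr (JR 0) (bitsH h2) = restr (JR 0) (bitsH h1) \<longleftrightarrow> fst (h2 ! 0) = fst (h1 ! 0)"
      unfolding JR0 restr_eq_iff bitsH_def using l by (auto simp: list_eq_iff_nth_eq)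
  qed
  also have "\<dots> = NN"
  proof (rule ent_unif_vec[OF finP])
    show "map_pmf (\<lambda>h. fst (h ! 0)) (P 0) = unif_vec NN"
      unfolding P_0 by (simp add: map_bind_pmf map_pmf_comp map_pmf_const bind_return_pmf')
  qed
  finally show ?thesis using JR0 by (simp add: card_cartesian_product)
qed

lemma base_I: "MI (P 0) (\<lambda>h. restr (JV 0) (bitsH h)) (Of 0) \<le> 0"
proof -
  have O0: "Of 0 = (\<lambda>h. [])" unfolding Of_def by auto
  have "ent (P 0) (\<lambda>h. (restr (JV 0) (bitsH h), Of 0 h)) = ent (P 0) (\<lambda>h. restr (JV 0) (bitsH h))"
    by (rule ent_eq_det[OF finP]) (simp add: O0)
  thus ?thesis unfolding MI_def O0 using ent_const[OF finP, of 0 "[] :: 'z list list"] by simp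
qed

lemma step_R:
  assumes t: "t < T" and IH: "ent (P t) (\<lambda>h. restr (JR t) (bitsH h)) \<ge> card (JR t)"
  shows "ent (P (Suc t)) (\<lambda>h. restr (JR (Suc t)) (bitsH h)) \<ge> card (JR (Suc t))"
proof -
  define SJ where "SJ = JK t \<union> {t} \<times> (Ip t \<union> Ss t)"
  have tT: "t \<le> Suc T" "Suc t \<le> Suc T" using t by auto
  have SJsub: "SJ \<subseteq> JR t" unfolding SJ_def JR_def using IpH[of t] SsH[OF t] HN[of t] t by auto
  have eSJ: "ent (P t) (\<lambda>h. restr SJ (bitsH h)) = card SJ"
    by (rule restr_max_sub[OF finP finJR[OF tT(1)] IH SJsub])
  have JRS: "JR (Suc t) = JK (Suc t) \<union> {Suc t} \<times> {..<NN}" unfolding JR_def ..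
  have J0: "\<And>s i. (s, i) \<in> JK (Suc t) \<Longrightarrow> s \<le> t" unfolding JK_def by auto
  have "ent (P (Suc t)) (\<lambda>h. restr (JR (Suc t)) (bitsH h))
      = ent (P (Suc t)) (\<lambda>h'. (restr (JK (Suc t)) (bitsH (butlast h')), restr {..<NN} (\<lambda>i. uL h' ! i)))"
    unfolding JRS by (rule ent_split_last[OF J0])
  also have "\<dots> = ent (P (Suc t)) (\<lambda>h'. (restr SJ (bitsH (butlast h')), yL h'))"
  proof (rule ent_eq_det[OF finP])
    fix h1 h2 assume h: "h1 \<in> set_pmf (P (Suc t))" "h2 \<in> set_pmf (P (Suc t))"
    note nl = uL_notL[OF h(1)] uL_notL[OF h(2)]
    have bij: "bij_betw (sig (Suc t)) ({..<NN} - L) (Ss t)" using sigbij[OF t] .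
    have sigin: "\<And>i. i < NN \<Longrightarrow> i \<notin> L \<Longrightarrow> sig (Suc t) i \<in> Ss t" using bij by (auto simp: bij_betw_def)
    have sigsurj: "\<And>j. j \<in> Ss t \<Longrightarrow> \<exists>i. i < NN \<and> i \<notin> L \<and> j = sig (Suc t) i"
      using bij unfolding bij_betw_def by force
    show "(restr (JK (Suc t)) (bitsH (butlast h2)), restr {..<NN} (\<lambda>i. uL h2 ! i)) =
          (restr (JK (Suc t)) (bitsH (butlast h1)), restr {..<NN} (\<lambda>i. uL h1 ! i)) \<longleftrightarrow>
          (restr SJ (bitsH (butlast h2)), yL h2) = (restr SJ (bitsH (butlast h1)), yL h1)"
    proof
      assume A: "(restr (JK (Suc t)) (bitsH (butlast h2)), restr {..<NN} (\<lambda>i. uL h2 ! i)) =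
          (restr (JK (Suc t)) (bitsH (butlast h1)), restr {..<NN} (\<lambda>i. uL h1 ! i))"
      hence A1: "\<And>x. x \<in> JK (Suc t) \<Longrightarrow> bitsH (butlast h2) x = bitsH (butlast h1) x"
        and A2: "\<And>i. i < NN \<Longrightarrow> uL h2 ! i = uL h1 ! i" by (auto simp: restr_eq_iff)
      have "\<forall>x\<in>SJ. bitsH (butlast h2) x = bitsH (butlast h1) x"
      proof
        fix x assume x: "x \<in> SJ"
        show "bitsH (butlast h2) x = bitsH (butlast h1) x"
        proof (cases "x \<in> JK (Suc t)")
          case True thus ?thesis using A1 by simp
        next
          case False
          then obtain j where j: "x = (t, j)" "j \<in> Ss t" using x unfolding SJ_def JK_Suc by auto
          obtain i where i: "i < NN" "i \<notin> L" "j = sig (Suc t) i" using sigsurj[OF j(2)] by blast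
          show ?thesis using A2[OF i(1)] nl(1)[OF i(1,2)] nl(2)[OF i(1,2)] j i by simp
        qed
      qed
      moreover have "yL h2 = yL h1" using A2 LN by (auto simp: restr_eq_iff)
      ultimately show "(restr SJ (bitsH (butlast h2)), yL h2) = (restr SJ (bitsH (butlast h1)), yL h1)"
        by (simp add: restr_eq_iff)
    next
      assume B: "(restr SJ (bitsH (butlast h2)), yL h2) = (restr SJ (bitsH (butlast h1)), yL h1)"
      hence B1: "\<And>x. x \<in> SJ \<Longrightarrow> bitsH (butlast h2) x = bitsH (butlast h1) x"
        and B2: "\<And>i. i \<in> L \<Longrightarrow> uL h2 ! i = uL h1 ! i" by (auto simp: restr_eq_iff)
      have "JK (Suc t) \<subseteq> SJ" unfolding SJ_def JK_Suc by auto
      hence "restr (JK (Suc t)) (bitsH (butlast h2)) = restr (JK (Suc t)) (bitsH (butlast h1))"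
        using B1 by (auto simp: restr_eq_iff)
      moreover have "uL h2 ! i = uL h1 ! i" if i: "i < NN" for i
      proof (cases "i \<in> L")
        case True thus ?thesis using B2 by simp
      next
        case False
        have "(t, sig (Suc t) i) \<in> SJ" unfolding SJ_def using sigin[OF i False] by simp
        thus ?thesis using B1 nl(1)[OF i False] nl(2)[OF i False] by simp
      qed
      ultimately show "(restr (JK (Suc t)) (bitsH (butlast h2)), restr {..<NN} (\<lambda>i. uL h2 ! i)) =
          (restr (JK (Suc t)) (bitsH (butlast h1)), restr {..<NN} (\<lambda>i. uL h1 ! i))"
        by (auto simp: restr_eq_iff)
    qed
  qed
  also have "\<dots> = ent (P (Suc t)) (\<lambda>h'. restr SJ (bitsH (butlast h'))) + Ky t"
    by (rule ent_fresh[OF LN])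
  also have "\<dots> = card SJ + card L"
  proof -
    have "Ky t = ent (P (Suc t)) yL" using ent_fresh0[OF LN] by simp
    also have "\<dots> = card L"
    proof -
      have "map_pmf yL (P (Suc t)) = Yd"
      proof -
        have "map_pmf (\<lambda>h'. ((\<lambda>_. ()) (butlast h'), yL h')) (P (Suc t)) = bind_pmf (map_pmf (\<lambda>_. ()) (P t)) (\<lambda>x. map_pmf (Pair x) Yd)"
          by (rule fresh[OF LN])
        hence "map_pmf snd (map_pmf (\<lambda>h'. ((\<lambda>_. ()) (butlast h'), yL h')) (P (Suc t))) = map_pmf snd (bind_pmf (map_pmf (\<lambda>_. ()) (P t)) (\<lambda>x. map_pmf (Pair x) Yd))"
          by simp
        thus ?thesis by (simp add: map_pmf_comp map_pmf_const bind_return_pmf)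
      qed
      hence "ent (P (Suc t)) yL = ent Yd (\<lambda>x. x)" using ent_map[OF finP, of yL "Suc t" "\<lambda>x. x"] by simp
      thus ?thesis using ent_Yd[OF LN] by simp
    qed
    finally show ?thesis using ent_lift[where f="\<lambda>h. restr SJ (bitsH h)" and t=t] eSJ by simp
  qed
  also have "card SJ + card L = card (JR (Suc t))"
  proof -
    have d1: "JK t \<inter> {t} \<times> (Ip t \<union> Ss t) = {}" unfolding JK_def by auto
    have d2: "{t} \<times> Ip t \<inter> {t} \<times> Ss t = {}" using disj[OF t] by auto
    have "Ip t \<subseteq> {..<NN}" "Ss t \<subseteq> {..<NN}" using IpH[of t] SsH[OF t] HN[of t] t by auto
    hence fI: "finite (Ip t)" "finite (Ss t)" using finite_subset by blast+
    have cS: "card (Ss t) = card ({..<NN} - L)" using bij_betw_same_card[OF sigbij[OF t]] by simp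
    have "card L \<le> card {..<NN}" using LN by (intro card_mono) auto
    hence cL: "card ({..<NN} - L) + card L = NN" using LN by (simp add: card_Diff_subset finite_subset)
    have "card SJ = card (JK t) + card (Ip t) + card (Ss t)"
      unfolding SJ_def using d1 d2 finJK[OF tT(1)] fI
      by (simp add: card_Un_disjoint Sigma_Un_distrib2 card_cartesian_product)
    moreover have "card (JK (Suc t)) = card (JK t) + card (Ip t)"
    proof -
      have "JK t \<inter> {t} \<times> Ip t = {}" unfolding JK_def by auto
      thus ?thesis unfolding JK_Suc using finJK[OF tT(1)] fI by (simp add: card_Un_disjoint card_cartesian_product)
    qed
    ultimately show ?thesis using card_JR[OF tT(2)] cS cL by simp
  qed
  finally show ?thesis by simp
qed

end



context scheme_hyp begin

lemma Of_Suc: "h' \<in> set_pmf (P (Suc t)) \<Longrightarrow> Of (Suc t) h' = Of t (butlast h') @ [zL h']"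
proof -
  assume h: "h' \<in> set_pmf (P (Suc t))"
  have "Of (Suc t) h' = map (\<lambda>s. snd (h' ! s)) [1..<Suc t] @ [snd (h' ! Suc t)]"
    unfolding Of_def by simp
  also have "map (\<lambda>s. snd (h' ! s)) [1..<Suc t] = Of t (butlast h')"
    unfolding Of_def using supp_facts(3)[OF h] by (intro map_cong) auto
  finally show ?thesis using supp_facts(4)[OF h] by simp
qed

lemma step_I:
  assumes t: "t < T"
    and IH: "MI (P t) (\<lambda>h. restr (JV t) (bitsH h)) (Of t) \<le> real t * (NN * (2 / ln 2 * \<delta>))"
    and R1: "ent (P (Suc t)) (\<lambda>h. restr (JR (Suc t)) (bitsH h)) \<ge> card (JR (Suc t))"
  shows "MI (P (Suc t)) (\<lambda>h. restr (JV (Suc t)) (bitsH h)) (Of (Suc t)) \<le> real (Suc t) * (NN * (2 / ln 2 * \<delta>))"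
proof -
  define P' where "P' = P (Suc t)"
  have fin: "finite (set_pmf P')" unfolding P'_def by (rule finP)
  define V0 where "V0 = (\<lambda>h :: (bool list \<times> 'z list) list. restr (JV t) (bitsH h))"
  define O0 where "O0 = Of t"
  define V' where "V' = (\<lambda>h :: (bool list \<times> 'z list) list. restr (JV (Suc t)) (bitsH h))"
  define Kp where "Kp = (\<lambda>h :: (bool list \<times> 'z list) list. restr (JK (Suc t)) (bitsH h))"
  define A' where "A' = (\<lambda>h :: (bool list \<times> 'z list) list. restr (Hs (Suc t)) (\<lambda>i. uL h ! i))"
  define X where "X = (\<lambda>h'. (V0 (butlast h'), yL h'))"
  have tT: "t \<le> Suc T" "Suc t \<le> Suc T" "t \<le> T" "Suc t \<le> T" using t by auto
  have sigin: "\<And>i. i < NN \<Longrightarrow> i \<notin> L \<Longrightarrow> sig (Suc t) i \<in> Hs t"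
    using sigbij[OF t] SsH[OF t] by (auto simp: bij_betw_def)
  have uLdet: "uL h1 = uL h2" if h: "h1 \<in> set_pmf P'" "h2 \<in> set_pmf P'"
      and eq: "V0 (butlast h1) = V0 (butlast h2)" "yL h1 = yL h2" for h1 h2
  proof -
    have l: "length (uL h1) = NN" "length (uL h2) = NN" using supp_facts(5) h unfolding P'_def by auto
    have "uL h1 ! i = uL h2 ! i" if i: "i < NN" for i
    proof (cases "i \<in> L")
      case True thus ?thesis using eq(2) by (auto simp: restr_eq_iff)
    next
      case False
      have "(t, sig (Suc t) i) \<in> JV t" unfolding JV_def using sigin[OF i False] by simp
      hence "bitsH (butlast h1) (t, sig (Suc t) i) = bitsH (butlast h2) (t, sig (Suc t) i)"
        using eq(1) unfolding V0_def by (auto simp: restr_eq_iff)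
      thus ?thesis using uL_notL[OF h(1)[unfolded P'_def] i False] uL_notL[OF h(2)[unfolded P'_def] i False] by simp
    qed
    thus ?thesis using l by (simp add: list_eq_iff_nth_eq)
  qed
  have yLdet: "yL h1 = yL h2" if "uL h1 = uL h2" for h1 h2 using that by simp
  have V'det: "V' h1 = V' h2" if h: "h1 \<in> set_pmf P'" "h2 \<in> set_pmf P'"
      and eq: "V0 (butlast h1) = V0 (butlast h2)" "uL h1 = uL h2" for h1 h2
  proof -
    have J0: "\<And>s i. (s, i) \<in> JK (Suc t) \<Longrightarrow> s \<le> t" unfolding JK_def by auto
    have "JK (Suc t) \<subseteq> JV t" unfolding JK_Suc JV_def using IpH[OF tT(3)] by auto
    hence "restr (JK (Suc t)) (bitsH (butlast h1)) = restr (JK (Suc t)) (bitsH (butlast h2))"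
      using eq(1) unfolding V0_def by (auto simp: restr_eq_iff)
    thus ?thesis unfolding V'_def JV_def using restr_split_last[OF h[unfolded P'_def] J0] eq(2) by simp
  qed
  have KpA: "V' h1 = V' h2 \<longleftrightarrow> Kp (butlast h1) = Kp (butlast h2) \<and> A' h1 = A' h2"
    if h: "h1 \<in> set_pmf P'" "h2 \<in> set_pmf P'" for h1 h2
  proof -
    have J0: "\<And>s i. (s, i) \<in> JK (Suc t) \<Longrightarrow> s \<le> t" unfolding JK_def by auto
    show ?thesis unfolding V'_def JV_def Kp_def A'_def using restr_split_last[OF h[unfolded P'_def] J0] by simp
  qed
  have Odet: "Of (Suc t) h1 = Of (Suc t) h2 \<longleftrightarrow> (O0 (butlast h1), zL h1) = (O0 (butlast h2), zL h2)"
    if h: "h1 \<in> set_pmf P'" "h2 \<in> set_pmf P'" for h1 h2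
    using Of_Suc h unfolding P'_def O0_def by simp
  have eO: "ent P' (Of (Suc t)) = ent P' (\<lambda>h'. (O0 (butlast h'), zL h'))"
    by (rule ent_eq_det[OF fin]) (simp add: Odet)
  have eVO: "ent P' (\<lambda>h'. (V' h', Of (Suc t) h')) = ent P' (\<lambda>h'. (V' h', (O0 (butlast h'), zL h')))"
    by (rule ent_eq_det[OF fin]) (auto simp: Odet)
  have ssa1: "ent P' (\<lambda>h'. (X h', O0 (butlast h'), (V' h', zL h'))) + ent P' (\<lambda>h'. (V' h', zL h'))
      \<le> ent P' (\<lambda>h'. (X h', (V' h', zL h'))) + ent P' (\<lambda>h'. (O0 (butlast h'), (V' h', zL h')))"
    by (rule ssa[OF fin])
  have det1: "ent P' (\<lambda>h'. (X h', O0 (butlast h'), (V' h', zL h'))) = ent P' (\<lambda>h'. (((V0 (butlast h'), O0 (butlast h')), uL h'), zL h'))"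
    by (rule ent_eq_det[OF fin]) (auto simp: X_def dest: uLdet V'det)
  have det2: "ent P' (\<lambda>h'. (X h', (V' h', zL h'))) = ent P' (\<lambda>h'. ((V0 (butlast h'), uL h'), zL h'))"
    by (rule ent_eq_det[OF fin]) (auto simp: X_def dest: uLdet V'det)
  have det3: "ent P' (\<lambda>h'. (O0 (butlast h'), (V' h', zL h'))) = ent P' (\<lambda>h'. (V' h', (O0 (butlast h'), zL h')))"
    by (rule ent_eq_det[OF fin]) auto
  have mk1: "ent P' (\<lambda>h'. (((V0 (butlast h'), O0 (butlast h')), uL h'), zL h')) = ent P' (\<lambda>h'. ((V0 (butlast h'), O0 (butlast h')), uL h')) + Kz t"
    unfolding P'_def using ent_markov[where a="\<lambda>h. (V0 h, O0 h)" and t=t] by simp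
  have mk2: "ent P' (\<lambda>h'. ((V0 (butlast h'), uL h'), zL h')) = ent P' (\<lambda>h'. (V0 (butlast h'), uL h')) + Kz t"
    unfolding P'_def using ent_markov[where a="V0" and t=t] by simp
  have det4: "ent P' (\<lambda>h'. ((V0 (butlast h'), O0 (butlast h')), uL h')) = ent P' (\<lambda>h'. ((V0 (butlast h'), O0 (butlast h')), yL h'))"
    by (rule ent_eq_det[OF fin]) (auto dest: uLdet)
  have det5: "ent P' (\<lambda>h'. (V0 (butlast h'), uL h')) = ent P' (\<lambda>h'. (V0 (butlast h'), yL h'))"
    by (rule ent_eq_det[OF fin]) (auto dest: uLdet)
  have fr1: "ent P' (\<lambda>h'. ((V0 (butlast h'), O0 (butlast h')), yL h')) = ent (P t) (\<lambda>h. (V0 h, O0 h)) + Ky t"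
    unfolding P'_def using ent_fresh[OF LN, where a="\<lambda>h. (V0 h, O0 h)" and t=t] ent_lift[where f="\<lambda>h. (V0 h, O0 h)" and t=t] by simp
  have fr2: "ent P' (\<lambda>h'. (V0 (butlast h'), yL h')) = ent (P t) V0 + Ky t"
    unfolding P'_def using ent_fresh[OF LN, where a="V0" and t=t] ent_lift[where f="V0" and t=t] by simp
  have sa1: "ent P' (\<lambda>h'. (O0 (butlast h'), zL h')) \<le> ent (P t) O0 + ent P' zL"
    using subadd[OF fin, of "\<lambda>h'. O0 (butlast h')" zL] ent_lift[where f=O0 and t=t] unfolding P'_def by simp
  have part1: "MI P' V' (Of (Suc t)) \<le> MI (P t) V0 O0 + (ent P' V' + ent P' zL - ent P' (\<lambda>h'. (V' h', zL h')))"
    unfolding MI_def using eO eVO ssa1 det1 det2 det3 mk1 mk2 det4 det5 fr1 fr2 sa1 by linarith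
  have e6: "ent P' V' = ent P' (\<lambda>h'. (Kp (butlast h'), A' h'))"
    by (rule ent_eq_det[OF fin]) (simp add: KpA)
  have e7: "ent P' (\<lambda>h'. (V' h', zL h')) = ent P' (\<lambda>h'. (Kp (butlast h'), (A' h', zL h')))"
    by (rule ent_eq_det[OF fin]) (auto simp: KpA)
  have sa2: "ent P' (\<lambda>h'. (Kp (butlast h'), A' h')) \<le> ent P' (\<lambda>h'. Kp (butlast h')) + ent P' A'"
    by (rule subadd[OF fin])
  have mono: "ent P' (\<lambda>h'. Kp (butlast h')) + ent P' (\<lambda>h'. (A' h', zL h')) - ent P' (\<lambda>h'. (Kp (butlast h'), (A' h', zL h')))
     \<le> ent P' (\<lambda>h'. Kp (butlast h')) + ent P' (\<lambda>h'. (uL h', zL h')) - ent P' (\<lambda>h'. (Kp (butlast h'), (uL h', zL h')))"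
    by (rule mi_mono_right[OF fin]) (auto simp: A'_def)
  have det8: "ent P' (\<lambda>h'. (Kp (butlast h'), (uL h', zL h'))) = ent P' (\<lambda>h'. ((Kp (butlast h'), uL h'), zL h'))"
    by (rule ent_eq_det[OF fin]) (simp only: prod.inject, blast)
  have mk3: "ent P' (\<lambda>h'. ((Kp (butlast h'), uL h'), zL h')) = ent P' (\<lambda>h'. (Kp (butlast h'), uL h')) + Kz t"
    unfolding P'_def using ent_markov[where a="Kp" and t=t] by simp
  have mk0: "ent P' (\<lambda>h'. (uL h', zL h')) = ent P' uL + Kz t" unfolding P'_def by (rule ent_markov0)
  have KpEq: "Kp (butlast h) = restr (JK (Suc t)) (bitsH h)" if h: "h \<in> set_pmf P'" for h
  proof -
    have b: "\<And>s i. s < Suc t \<Longrightarrow> bitsH h (s, i) = bitsH (butlast h) (s, i)"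
      using bits_bl[of h t] h unfolding P'_def by simp
    show ?thesis unfolding Kp_def JK_def restr_def using b by (auto simp: fun_eq_iff)
  qed
  have eKp: "ent P' (\<lambda>h'. Kp (butlast h')) = ent P' (\<lambda>h. restr (JK (Suc t)) (bitsH h))"
    by (rule ent_eq_det[OF fin]) (simp add: KpEq)
  have euL: "ent P' uL = ent P' (\<lambda>h. restr ({Suc t} \<times> {..<NN}) (bitsH h))"
  proof (rule ent_eq_det[OF fin])
    fix h1 h2 assume h: "h1 \<in> set_pmf P'" "h2 \<in> set_pmf P'"
    have l: "length (uL h1) = NN" "length (uL h2) = NN" using supp_facts(5) h unfolding P'_def by auto
    show "uL h2 = uL h1 \<longleftrightarrow> restr ({Suc t} \<times> {..<NN}) (bitsH h2) = restr ({Suc t} \<times> {..<NN}) (bitsH h1)"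
      using l bits_last[OF h(1)[unfolded P'_def]] bits_last[OF h(2)[unfolded P'_def]]
      by (auto simp: restr_eq_iff list_eq_iff_nth_eq)
  qed
  have eKpuL: "ent P' (\<lambda>h'. (Kp (butlast h'), uL h')) = ent P' (\<lambda>h. (restr (JK (Suc t)) (bitsH h), restr ({Suc t} \<times> {..<NN}) (bitsH h)))"
  proof (rule ent_eq_det[OF fin])
    fix h1 h2 assume h: "h1 \<in> set_pmf P'" "h2 \<in> set_pmf P'"
    have l: "length (uL h1) = NN" "length (uL h2) = NN" using supp_facts(5) h unfolding P'_def by auto
    have "Kp (butlast h1) = restr (JK (Suc t)) (bitsH h1)" "Kp (butlast h2) = restr (JK (Suc t)) (bitsH h2)"
      using h KpEq by auto
    thus "(Kp (butlast h2), uL h2) = (Kp (butlast h1), uL h1) \<longleftrightarrow>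
       (restr (JK (Suc t)) (bitsH h2), restr ({Suc t} \<times> {..<NN}) (bitsH h2)) = (restr (JK (Suc t)) (bitsH h1), restr ({Suc t} \<times> {..<NN}) (bitsH h1))"
      using l bits_last[OF h(1)[unfolded P'_def]] bits_last[OF h(2)[unfolded P'_def]]
      by (auto simp: restr_eq_iff list_eq_iff_nth_eq)
  qed
  have indep: "ent P' (\<lambda>h. (restr (JK (Suc t)) (bitsH h), restr ({Suc t} \<times> {..<NN}) (bitsH h)))
      = ent P' (\<lambda>h. restr (JK (Suc t)) (bitsH h)) + ent P' (\<lambda>h. restr ({Suc t} \<times> {..<NN}) (bitsH h))"
    using R1 unfolding P'_def[symmetric]
    by (intro restr_max_indep[OF fin finJR[OF tT(2)]]) (auto simp: JR_def JK_def)
  have part2: "ent P' V' + ent P' zL - ent P' (\<lambda>h'. (V' h', zL h')) \<le> ent P' A' + ent P' zL - ent P' (\<lambda>h'. (A' h', zL h'))"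
    using e6 e7 sa2 mono det8 mk3 mk0 eKp euL eKpuL indep by linarith
  have euN: "ent P' uL = NN"
  proof -
    have "ent P' (\<lambda>h. restr ({Suc t} \<times> {..<NN}) (bitsH h)) = card ({Suc t} \<times> {..<NN})"
      using R1 unfolding P'_def[symmetric] by (intro restr_max_sub[OF fin finJR[OF tT(2)]]) (auto simp: JR_def)
    thus ?thesis using euL by (simp add: card_cartesian_product)
  qed
  have unif: "map_pmf uL P' = unif_vec NN"
  proof -
    have "\<And>h. h \<in> set_pmf P' \<Longrightarrow> length (uL h) = NN" using supp_facts(5)[of _ t] unfolding P'_def by blast
    hence "uL ` set_pmf P' \<subseteq> {u. length u = NN}" by auto
    moreover have "ent P' uL \<ge> log 2 (card {u :: bool list. length u = NN})" using euN by (simp add: card_bvec)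
    ultimately show ?thesis unfolding unif_vec_def by (intro ent_max_uniform[OF fin finite_bvec]) auto
  qed
  define Q where "Q = map_pmf (\<lambda>h'. (uL h', zL h')) P'"
  have Qeq: "Q = polar_joint n (Wzl (Suc t))" unfolding Q_def P'_def by (rule polar_ident[OF unif[unfolded P'_def]])
  interpret PQ: polarQ Q NN
  proof
    show "finite (set_pmf Q)" unfolding Qeq by (rule finite_polar_joint)
    show "\<And>\<omega>. \<omega> \<in> set_pmf Q \<Longrightarrow> length (fst \<omega>) = NN" using polar_joint_set unfolding Qeq by blast
  qed
  have HsN: "Hs (Suc t) \<subseteq> {..<NN}" using HN[OF tT(4)] .
  have pm: "ent Q (PQ.uR (Hs (Suc t))) + ent Q snd - ent Q (\<lambda>\<omega>. (PQ.uR (Hs (Suc t)) \<omega>, snd \<omega>))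
        \<le> card (Hs (Suc t)) * (2 / ln 2 * \<delta>)"
    by (rule PQ.polar_mi[OF HsN]) (use hb[of "Suc t"] tT Qeq in auto)
  have part3: "ent P' A' + ent P' zL - ent P' (\<lambda>h'. (A' h', zL h')) \<le> card (Hs (Suc t)) * (2 / ln 2 * \<delta>)"
    using pm unfolding Q_def using fin by (simp add: ent_map PQ.uR_def A'_def)
  have cH: "card (Hs (Suc t)) * (2 / ln 2 * \<delta>) \<le> NN * (2 / ln 2 * \<delta>)"
  proof -
    have "card (Hs (Suc t)) \<le> card {..<NN}" using HsN by (intro card_mono) auto
    thus ?thesis using dpos by (intro mult_right_mono) auto
  qed
  have "MI P' V' (Of (Suc t)) \<le> real t * (NN * (2 / ln 2 * \<delta>)) + NN * (2 / ln 2 * \<delta>)"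
    using part1 part2 part3 cH IH unfolding V0_def O0_def by linarith
  moreover have "\<And>c::real. real t * c + c = real (Suc t) * c" by (simp add: algebra_simps)
  hence "real t * (NN * (2 / ln 2 * \<delta>)) + NN * (2 / ln 2 * \<delta>) = real (Suc t) * (NN * (2 / ln 2 * \<delta>))"
    by blast
  ultimately have "MI P' V' (Of (Suc t)) \<le> real (Suc t) * (NN * (2 / ln 2 * \<delta>))" by linarith
  thus ?thesis unfolding P'_def V'_def .
qed

end



context scheme_hyp begin

lemma main_ind:
  "t \<le> T \<Longrightarrow> ent (P t) (\<lambda>h. restr (JR t) (bitsH h)) \<ge> card (JR t) \<and>
     MI (P t) (\<lambda>h. restr (JV t) (bitsH h)) (Of t) \<le> real t * (NN * (2 / ln 2 * \<delta>))"
proof (induction t)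
  case 0
  show ?case by (rule conjI[OF base_R]) (simp only: of_nat_0 mult_zero_left base_I)
next
  case (Suc t)
  hence t: "t < T" by simp
  hence tT: "t \<le> T" by simp
  have IH1: "ent (P t) (\<lambda>h. restr (JR t) (bitsH h)) \<ge> card (JR t)"
    using Suc.IH[OF tT] by (rule conjunct1)
  have IH2: "MI (P t) (\<lambda>h. restr (JV t) (bitsH h)) (Of t) \<le> real t * (NN * (2 / ln 2 * \<delta>))"
    using Suc.IH[OF tT] by (rule conjunct2)
  have R: "ent (P (Suc t)) (\<lambda>h. restr (JR (Suc t)) (bitsH h)) \<ge> card (JR (Suc t))"
    by (rule step_R[OF t IH1])
  show ?case by (rule conjI[OF R step_I[OF t IH2 R]])
qed

definition KL :: "(bool list \<times> 'z list) list \<Rightarrow> bool list list" where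
  "KL h = map (\<lambda>t. map (\<lambda>i. fst (h ! t) ! i) (sorted_list_of_set (Ip t))) [1..<Suc T]"

lemma KL_det:
  assumes eq: "restr (JV T) (bitsH h1) = restr (JV T) (bitsH h2)"
  shows "KL h1 = KL h2"
proof -
  have eq': "\<And>x. x \<in> JV T \<Longrightarrow> bitsH h1 x = bitsH h2 x" using eq by (simp add: restr_eq_iff)
  have "fst (h1 ! t) ! i = fst (h2 ! t) ! i" if t: "t \<in> set [1..<Suc T]" and i: "i \<in> set (sorted_list_of_set (Ip t))" for t i
  proof -
    have "t < Suc T" using t by (simp only: set_upt atLeastLessThan_iff)
    hence tT: "t \<le> T" by (simp only: less_Suc_eq_le)
    have fin: "finite (Ip t)" by (rule finite_subset[OF subset_trans[OF IpH[OF tT] HN[OF tT]]]) simp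
    hence iI: "i \<in> Ip t" using i by simp
    have "(t, i) \<in> JV T"
    proof (cases "t < T")
      case True thus ?thesis using iI unfolding JV_def JK_def by simp
    next
      case False hence "t = T" using tT by simp
      thus ?thesis using iI IpH[of T] unfolding JV_def by auto
    qed
    from eq'[OF this] show ?thesis unfolding bitsH_def by simp
  qed
  thus ?thesis unfolding KL_def by (intro map_cong refl) blast
qed

lemma leak_bound: "MI (P T) KL (Of T) \<le> real T * (NN * (2 / ln 2 * \<delta>))"
proof -
  have "MI (P T) KL (Of T) \<le> MI (P T) (\<lambda>h. restr (JV T) (bitsH h)) (Of T)"
    unfolding MI_def by (rule mi_mono_left[OF finP]) (rule KL_det)
  also have "\<dots> \<le> real T * (NN * (2 / ln 2 * \<delta>))" by (rule conjunct2[OF main_ind[OF order_refl]])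
  finally show ?thesis .
qed

end



lemma final_helper:
  fixes Wzl :: "nat \<Rightarrow> (bool \<Rightarrow> 'z::finite pmf) list"
  assumes B'I: "\<And>t. t \<le> T \<Longrightarrow> B' t \<subseteq> L \<inter> H t"
    and sigb: "\<And>t. t < T \<Longrightarrow> bij_betw (sig (Suc t)) ({..<2 ^ n} - L) ((H t - L) \<union> B' t)"
    and LN: "L \<subseteq> {..<2 ^ n}" and HN: "\<And>t. H t \<subseteq> {..<2 ^ n}"
    and hb: "\<And>t i. i \<in> H t \<Longrightarrow> bhatt (map_pmf (\<lambda>(u, y). (u ! i, (take i u, y))) (polar_joint n (Wzl t))) \<ge> 1 - \<delta>"
    and dpos: "\<delta> \<ge> 0"
  shows "leakage n L (\<lambda>t. L \<inter> H t - B' t) sig Wzl T \<le> real (T + 1) * (2 / ln 2 * real (2 ^ n) * \<delta>)"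
proof -
  interpret S: scheme_hyp n L "\<lambda>t. L \<inter> H t - B' t" sig Wzl H "\<lambda>t. (H t - L) \<union> B' t" T \<delta>
  proof
    show "L \<subseteq> {..<2 ^ n}" by (rule LN)
    show "\<And>t. t \<le> T \<Longrightarrow> H t \<subseteq> {..<2 ^ n}" using HN by blast
    show "\<And>t. t \<le> T \<Longrightarrow> L \<inter> H t - B' t \<subseteq> H t" by blast
    show "H t - L \<union> B' t \<subseteq> H t" if "t < T" for t
    proof -
      have "B' t \<subseteq> L \<inter> H t" using B'I that by simp
      thus ?thesis by blast
    qed
    show "\<And>t. t < T \<Longrightarrow> (L \<inter> H t - B' t) \<inter> (H t - L \<union> B' t) = {}" by blast
    show "\<And>t. t < T \<Longrightarrow> bij_betw (sig (Suc t)) ({..<2 ^ n} - L) (H t - L \<union> B' t)" by (rule sigb)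
    show "\<And>t i. 1 \<le> t \<Longrightarrow> t \<le> T \<Longrightarrow> i \<in> H t \<Longrightarrow>
        1 - \<delta> \<le> bhatt (map_pmf (\<lambda>(u, y). (u ! i, (take i u, y))) (polar_joint n (Wzl t)))" using hb by blast
    show "0 \<le> \<delta>" by (rule dpos)
  qed
  have "leakage n L (\<lambda>t. L \<inter> H t - B' t) sig Wzl T = mi (map_pmf (\<lambda>h. (S.KL h, S.Of T h)) (S.P T))"
    unfolding leakage_def S.KL_def S.Of_def ..
  also have "\<dots> = S.MI (S.P T) S.KL (S.Of T)" unfolding S.MI_def by (rule mi_ent[OF S.finP])
  also have "\<dots> \<le> real T * (real (2 ^ n) * (2 / ln 2 * \<delta>))" by (rule S.leak_bound)
  also have "\<dots> \<le> real (T + 1) * (2 / ln 2 * real (2 ^ n) * \<delta>)"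
  proof -
    have "0 \<le> 2 / ln 2 * real (2 ^ n) * \<delta>" using dpos by simp
    hence "real T * (2 / ln 2 * real (2 ^ n) * \<delta>) \<le> real (T + 1) * (2 / ln 2 * real (2 ^ n) * \<delta>)"
      by (intro mult_right_mono) auto
    thus ?thesis by (simp add: algebra_simps)
  qed
  finally show ?thesis .
qed

theorem proposition5:
  fixes W :: "bool \<Rightarrow> 'y::finite pmf"
    and Wz :: "'st::finite \<Rightarrow> bool \<Rightarrow> 'z::finite pmf"
    and \<beta> :: real
  assumes "sym_channel W"
    and "\<forall>s. sym_channel (Wz s)"
    and "0 < \<beta>" and "\<beta> < 1 / 2"
  shows "\<exists>C::real. \<exists>n0::nat. \<forall>n\<ge>n0. \<forall>(T::nat) (ss :: nat \<Rightarrow> 'st list)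
           (B' :: nat \<Rightarrow> nat set) (sig :: nat \<Rightarrow> nat \<Rightarrow> nat).
     (let N = 2 ^ n;
          L = Lset n \<beta> W;
          H = (\<lambda>t. Hset n \<beta> (map Wz (ss t)));
          I = (\<lambda>t. L \<inter> H t);
          F = (\<lambda>t. H t - L);
          B = (\<lambda>t. {..<N} - L - H t);
          I' = (\<lambda>t. I t - B' t)
      in (\<forall>t\<le>T. length (ss t) = N \<and> card (B t) < card (I t) \<and> B' t \<subseteq> I t \<and> card (B' t) = card (B t))
         \<and> (\<forall>t<T. bij_betw (sig (Suc t)) ({..<N} - L) (F t \<union> B' t))
         \<longrightarrow> leakage n L I' sig (\<lambda>t. map Wz (ss t)) T
               \<le> real (T + 1) * (C * real N * delta n \<beta>))"
  unfolding Let_def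
proof (intro exI[of _ "2 / ln 2"] exI[of _ "0::nat"] allI impI)
  fix n :: nat and T :: nat and ss :: "nat \<Rightarrow> 'st list" and B' :: "nat \<Rightarrow> nat set" and sig :: "nat \<Rightarrow> nat \<Rightarrow> nat"
  assume hyp: "(\<forall>t\<le>T. length (ss t) = 2 ^ n \<and>
            card ({..<2 ^ n} - Lset n \<beta> W - Hset n \<beta> (map Wz (ss t))) < card (Lset n \<beta> W \<inter> Hset n \<beta> (map Wz (ss t))) \<and>
            B' t \<subseteq> Lset n \<beta> W \<inter> Hset n \<beta> (map Wz (ss t)) \<and>
            card (B' t) = card ({..<2 ^ n} - Lset n \<beta> W - Hset n \<beta> (map Wz (ss t)))) \<and>
        (\<forall>t<T. bij_betw (sig (Suc t)) ({..<2 ^ n} - Lset n \<beta> W) (Hset n \<beta> (map Wz (ss t)) - Lset n \<beta> W \<union> B' t))"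
  show "leakage n (Lset n \<beta> W) (\<lambda>t. Lset n \<beta> W \<inter> Hset n \<beta> (map Wz (ss t)) - B' t) sig (\<lambda>t. map Wz (ss t)) T
        \<le> real (T + 1) * (2 / ln 2 * real (2 ^ n) * delta n \<beta>)"
  proof (rule final_helper)
    show "\<And>t. t \<le> T \<Longrightarrow> B' t \<subseteq> Lset n \<beta> W \<inter> Hset n \<beta> (map Wz (ss t))" using hyp by blast
    show "\<And>t. t < T \<Longrightarrow> bij_betw (sig (Suc t)) ({..<2 ^ n} - Lset n \<beta> W) (Hset n \<beta> (map Wz (ss t)) - Lset n \<beta> W \<union> B' t)"
      using hyp by blast
    show "Lset n \<beta> W \<subseteq> {..<2 ^ n}" unfolding Lset_def by auto
    show "\<And>t. Hset n \<beta> (map Wz (ss t)) \<subseteq> {..<2 ^ n}" unfolding Hset_def by auto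
    show "\<And>t i. i \<in> Hset n \<beta> (map Wz (ss t)) \<Longrightarrow>
        1 - delta n \<beta> \<le> bhatt (map_pmf (\<lambda>(u, y). (u ! i, (take i u, y))) (polar_joint n (map Wz (ss t))))"
      unfolding Hset_def bhatt_idx_def by auto
    show "0 \<le> delta n \<beta>" unfolding delta_def by simp
  qed
qed


end
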